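(* Let $S$ be a Hermitian $m\times m$ matrix such that $f(\mathbf{E})=\mathbf{E}\cdot S\mathbf{E}$ is $Q^*$-convex. For nonzero $\mathbf{k}\in\mathbb{R}^d$ let $\mathcal{S}_{\mathbf{k}}=\{\mathbf{H}\in\mathcal{E}_{\mathbf{k}}: f(\mathbf{H})=0\}$ and $\mathcal{U}_{\mathbf{k}}=\{\mathbf{G}\in\mathbb{C}^\ell:\hat L(\mathbf{k})\mathbf{G}\in\mathcal{S}_{\mathbf{k}}\}$. Then: (i) for every nonzero $\mathbf{k}$ and every $\mathbf{G}\in\mathcal{U}_{\mathbf{k}}$, $S\hat L(\mathbf{k})\mathbf{G}\in\mathcal{J}_{\mathbf{k}}$; (ii) if $\Lambda$ is a lattice in $\mathbb{R}^d$ with reciprocal set $\Lambda^*=\{\mathbf{k}: e^{i\mathbf{k}\cdot\mathbf{x}}\text{ is }\Lambda\text{-periodic}\}$, $\underline{\mathbf{U}}^1(\mathbf{x})=\sum_{\mathbf{k}\in\Lambda^*\setminus\{0\}}\widehat{\underline{\mathbf{U}}^1}(\mathbf{k})e^{i\mathbf{k}\cdot\mathbf{x}}$ with $\widehat{\underline{\mathbf{U}}^1}(\mathbf{k})\in\mathcal{U}_{\mathbf{k}}$ for all such $\mathbf{k}$ and $\sum_{\mathbf{k}}|\hat L(\mathbf{k})\widehat{\underline{\mathbf{U}}^1}(\mathbf{k})|^2<\infty$, and $\underline{\mathbf{U}}^0$ is a polynomial of degree at most $t$ with $L\underline{\mathbf{U}}^0=\underline{\mathbf{E}}^0$ constant,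 then $\underline{\mathbf{E}}=L(\underline{\mathbf{U}}^0+\underline{\mathbf{U}}^1)$ satisfies $\langle f(\underline{\mathbf{E}})\rangle=f(\langle\underline{\mathbf{E}}\rangle)$, and every nonzero-frequency Fourier coefficient of $\underline{\mathbf{J}}=S\underline{\mathbf{E}}$ at $\mathbf{k}$ lies in $\mathcal{J}_{\mathbf{k}}$.
   Context: Fix integers $d,\ell,m,t\ge 1$ and complex constants $A_{rq}$, $A^{a_1\ldots a_h}_{rqh}$ ($1\le r\le m$, $1\le q\le \ell$, $1\le h\le t$, $1\le a_i\le d$). Let $L$ be the $m\times\ell$ matrix of differential operators $L_{rq}=A_{rq}+\sum_{h=1}^t\sum_{a_1,\ldots,a_h=1}^d A^{a_1\ldots a_h}_{rqh}\partial_{x_{a_1}}\cdots\partial_{x_{a_h}}$ acting on $\mathbb{C}^\ell$-valued potentials on $\mathbb{R}^d$. For $\mathbf{k}\in\mathbb{R}^d$, $\hat L(\mathbf{k})$ is the $m\times\ell$ matrix with entries $A_{rq}+\sum_{h}\sum_{a_1,\ldots,a_h} i^hA^{a_1\ldots a_h}_{rqh}k_{a_1}\cdots k_{a_h}$, $\hat L^\dagger(\mathbf{k})$ its conjugate transpose, $\mathcal{E}_{\mathbf{k}}$ the range of $\hat L(\mathbf{k})$ and $\mathcal{J}_{\mathbf{k}}$ the null space of $\hat L^\dagger(\mathbf{k})$. For $\mathbf{a},\mathbf{b}\in\mathbb{C}^m$, $\mathbf{a}\cdot\mathbf{b}=\sum_r\overline{a_r}b_r$. A $\mathbb{C}^\ell$-valued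 function $\mathbf{U}$ on $\mathbb{R}^d$ is an admissible potential if $\mathbf{U}=\mathbf{U}^0+\mathbf{U}^1$, where $\mathbf{U}^0$ is a polynomial of degree at most $t$ such that $L\mathbf{U}^0$ is constant, and $\mathbf{U}^1$ is periodic with respect to some lattice (any lattice allowed) with $L\mathbf{U}^1$ (distributional) square-integrable over a period cell; $\langle\cdot\rangle$ denotes the average over a period cell. $f$ is $Q^*$-convex if $\langle f(\mathbf{E})\rangle\ge f(\langle\mathbf{E}\rangle)$ for every $\mathbf{E}=L\mathbf{U}$ with $\mathbf{U}$ admissible. *)

theory Defs
  imports "HOL-Analysis.Analysis"
begin

text \<open>Index types: 'd (space dimension d), 'l (number of potential components),
 'm (number of field components).  The operator L is given by
 A0 r q = A_{rq} and Ah h as r q = A^{a_1...a_h}_{rqh} for as = [a_1,...,a_h].\<close>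

definition cdot :: "complex^'m \<Rightarrow> complex^'m \<Rightarrow> complex" where
  "cdot a b = (\<Sum>r\<in>UNIV. cnj (a$r) * b$r)"

definition hermitian :: "complex^'m^'m \<Rightarrow> bool" where
  "hermitian S \<longleftrightarrow> (\<forall>i j. S$i$j = cnj (S$j$i))"

definition conj_transpose :: "complex^'l^'m \<Rightarrow> complex^'m^'l" where
  "conj_transpose M = (\<chi> q r. cnj (M$r$q))"

text \<open>f(E) = E . S E (real since S is Hermitian; we take the real part).\<close>
definition quadform :: "complex^'m^'m \<Rightarrow> complex^'m \<Rightarrow> real" where
  "quadform S E = Re (cdot E (S *v E))"

definition Lhat :: "('m \<Rightarrow> 'l \<Rightarrow> complex) \<Rightarrow> (nat \<Rightarrow> 'd::finite list \<Rightarrow> 'm \<Rightarrow> 'l \<Rightarrow> complex)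
    \<Rightarrow> nat \<Rightarrow> real^'d \<Rightarrow> complex^'l^'m" where
  "Lhat A0 Ah t k = (\<chi> r q. A0 r q + (\<Sum>h\<in>{1..t}. \<Sum>as\<in>{as::'d list. length as = h}.
      \<i>^h * Ah h as r q * prod_list (map (\<lambda>a. complex_of_real (k$a)) as)))"

definition rangeE where
  "rangeE A0 Ah t k = range (\<lambda>G. Lhat A0 Ah t k *v G)"

definition nullJ where
  "nullJ A0 Ah t k = {H. conj_transpose (Lhat A0 Ah t k) *v H = 0}"

definition Sset where
  "Sset S A0 Ah t k = {H \<in> rangeE A0 Ah t k. quadform S H = 0}"

definition Uset where
  "Uset S A0 Ah t k = {G. Lhat A0 Ah t k *v G \<in> Sset S A0 Ah t k}"

definition partial_deriv :: "'d::finite \<Rightarrow> (real^'d \<Rightarrow> complex) \<Rightarrow> real^'d \<Rightarrow> complex" where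
  "partial_deriv a F x = vector_derivative (\<lambda>s::real. F (x + s *\<^sub>R axis a 1)) (at 0)"

fun dpart :: "'d::finite list \<Rightarrow> (real^'d \<Rightarrow> complex) \<Rightarrow> real^'d \<Rightarrow> complex" where
  "dpart [] F = F"
| "dpart (a # as) F = partial_deriv a (dpart as F)"

definition Lop :: "('m \<Rightarrow> 'l \<Rightarrow> complex) \<Rightarrow> (nat \<Rightarrow> 'd::finite list \<Rightarrow> 'm \<Rightarrow> 'l \<Rightarrow> complex)
    \<Rightarrow> nat \<Rightarrow> (real^'d \<Rightarrow> complex^'l) \<Rightarrow> real^'d \<Rightarrow> complex^'m" where
  "Lop A0 Ah t U x = (\<chi> r. \<Sum>q\<in>UNIV. A0 r q * (U x $ q) + (\<Sum>h\<in>{1..t}. \<Sum>as\<in>{as::'d list. length as = h}.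
      Ah h as r q * dpart as (\<lambda>y. U y $ q) x))"

definition multidx :: "nat \<Rightarrow> ('d::finite \<Rightarrow> nat) set" where
  "multidx t = {\<alpha>. sum \<alpha> UNIV \<le> t}"

definition poly_deg_le :: "nat \<Rightarrow> (real^'d::finite \<Rightarrow> complex^'l) \<Rightarrow> bool" where
  "poly_deg_le t U \<longleftrightarrow> (\<exists>p :: ('d \<Rightarrow> nat) \<Rightarrow> complex^'l. \<forall>x.
      U x = (\<Sum>\<alpha>\<in>multidx t. (\<Prod>j\<in>UNIV. complex_of_real (x$j) ^ \<alpha> j) *s p \<alpha>))"

definition lattice :: "real^'d^'d \<Rightarrow> (real^'d::finite) set" where
  "lattice B = range (\<lambda>n::int^'d. B *v (\<chi> i. real_of_int (n$i)))"

definition recip :: "real^'d^'d \<Rightarrow> (real^'d::finite) set" where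
  "recip B = {k. \<forall>lam\<in>lattice B. \<forall>x. exp (\<i> * complex_of_real (k \<bullet> (x + lam)))
                                     = exp (\<i> * complex_of_real (k \<bullet> x))}"

definition cell :: "real^'d^'d \<Rightarrow> (real^'d::finite) set" where
  "cell B = (\<lambda>y. B *v y) ` {y. \<forall>i. 0 \<le> y$i \<and> y$i \<le> 1}"

definition avg :: "real^'d^'d \<Rightarrow> (real^'d::finite \<Rightarrow> 'b::{banach,second_countable_topology}) \<Rightarrow> 'b" where
  "avg B g = (1 / \<bar>det B\<bar>) *\<^sub>R (LINT x:cell B|lborel. g x)"

definition fourier_coeff :: "real^'d^'d \<Rightarrow> (real^'d::finite \<Rightarrow> complex^'m) \<Rightarrow> real^'d \<Rightarrow> complex^'m" where
  "fourier_coeff B g k = avg B (\<lambda>x. exp (- (\<i> * complex_of_real (k \<bullet> x))) *s g x)"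

definition has_L2_fourier :: "real^'d^'d \<Rightarrow> (real^'d::finite \<Rightarrow> complex^'m) \<Rightarrow> (real^'d \<Rightarrow> complex^'m) \<Rightarrow> bool" where
  "has_L2_fourier B E a \<longleftrightarrow> E \<in> borel_measurable lborel
     \<and> set_integrable lborel (cell B) (\<lambda>x. (norm (E x))^2)
     \<and> ((\<lambda>F. LINT x:cell B|lborel.
             (norm (E x - (\<Sum>k\<in>F. exp (\<i> * complex_of_real (k \<bullet> x)) *s a k)))^2)
          \<longlongrightarrow> 0) (finite_subsets_at_top (recip B))"

text \<open>An admissible field is E = L U^0 + L U^1 with U^0 a polynomial of
  degree <= t with L U^0 = E0 constant, and U^1 a Lambda-periodic (tempered) distribution with
  Fourier coefficients c k (k in recip B), so that L U^1 has Fourier coefficients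
  Lhat k c k, required square summable (L U^1 in L^2 of the cell).\<close>
definition qstar_convex :: "('m::finite \<Rightarrow> 'l::finite \<Rightarrow> complex) \<Rightarrow> (nat \<Rightarrow> 'd::finite list \<Rightarrow> 'm \<Rightarrow> 'l \<Rightarrow> complex)
    \<Rightarrow> nat \<Rightarrow> (complex^'m \<Rightarrow> real) \<Rightarrow> bool" where
  "qstar_convex A0 Ah t f \<longleftrightarrow>
    (\<forall>(B::real^'d^'d) (U0::real^'d \<Rightarrow> complex^'l) E0 (c::real^'d \<Rightarrow> complex^'l) E.
       invertible B \<and> poly_deg_le t U0 \<and> (\<forall>x. Lop A0 Ah t U0 x = E0)
       \<and> (\<exists>C N. \<forall>k\<in>recip B. norm (c k) \<le> C * (1 + norm k) ^ N)
       \<and> (\<lambda>k. (norm (Lhat A0 Ah t k *v c k))^2) summable_on recip B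
       \<and> has_L2_fourier B (\<lambda>x. E x - E0) (\<lambda>k. Lhat A0 Ah t k *v c k)
       \<and> set_integrable lborel (cell B) (\<lambda>x. f (E x))
       \<longrightarrow> avg B (\<lambda>x. f (E x)) \<ge> f (avg B E))"

end

theory Submission
  imports Defs
begin


typedef 'a wo = "UNIV :: 'a set" morphisms repw absw by auto

definition ixw :: "'a \<Rightarrow> nat" where "ixw = (SOME f. inj f)"

lemma ixw_inj: "inj (ixw :: 'a::finite \<Rightarrow> nat)"
proof -
  have "\<exists>f::'a \<Rightarrow> nat. inj f"
    using finite_imp_inj_to_nat_seg[of "UNIV::'a set"] by auto
  then show ?thesis unfolding ixw_def by (rule someI_ex)
qed

instantiation wo :: (finite) linorder
begin
definition less_eq_wo :: "'a wo \<Rightarrow> 'a wo \<Rightarrow> bool" where "less_eq_wo x y = (ixw (repw x) \<le> ixw (repw y))"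
definition less_wo :: "'a wo \<Rightarrow> 'a wo \<Rightarrow> bool" where "less_wo x y = (ixw (repw x) < ixw (repw y))"
instance
proof
  fix x y z :: "'a wo"
  have inj: "ixw (repw x) = ixw (repw y) \<Longrightarrow> x = y"
  proof -
    assume "ixw (repw x) = ixw (repw y)"
    then have "repw x = repw y" using ixw_inj[where 'a='a] by (simp add: inj_eq)
    then show "x = y" by (simp add: repw_inject)
  qed
  show "(x < y) = (x \<le> y \<and> \<not> y \<le> x)" unfolding less_eq_wo_def less_wo_def by linarith
  show "x \<le> x" unfolding less_eq_wo_def by linarith
  show "x \<le> y \<Longrightarrow> y \<le> z \<Longrightarrow> x \<le> z" unfolding less_eq_wo_def by linarith
  show "x \<le> y \<Longrightarrow> y \<le> x \<Longrightarrow> x = y" using inj unfolding less_eq_wo_def by linarith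
  show "x \<le> y \<or> y \<le> x" unfolding less_eq_wo_def by linarith
qed
end

instance wo :: (finite) finite
proof
  have "UNIV = absw ` (UNIV :: 'a set)" by (metis repw_inverse surj_def)
  then show "finite (UNIV :: 'a wo set)" by (metis finite finite_imageI)
qed

instance wo :: (finite) wellorder
proof
  fix P :: "'a wo \<Rightarrow> bool" and a :: "'a wo"
  assume H: "\<And>x. (\<And>y. y < x \<Longrightarrow> P y) \<Longrightarrow> P x"
  have "\<And>a. ixw (repw a) = n \<Longrightarrow> P a" for n
  proof (induction n rule: less_induct)
    case (less n)
    show ?case
    proof (rule H)
      fix y assume "y < a"
      then have "ixw (repw y) < n" using less.prems by (simp add: less_wo_def)
      then show "P y" using less.IH by blast
    qed
  qed
  then show "P a" by blast
qed



lemma Basis_real_vec: "(Basis :: (real^'n) set) = range (\<lambda>i. axis i 1)"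
  by (auto simp: Basis_vec_def)

lemma prod_Basis_vec: "prod f (Basis :: (real^'n) set) = (\<Prod>i\<in>UNIV. f (axis i 1))"
  unfolding Basis_real_vec by (subst prod.reindex) (auto simp: inj_on_def axis_eq_axis)

lemma inner_axis1: "(x::real^'n) \<bullet> axis i 1 = x $ i"
  by (simp add: inner_axis)

definition tow :: "real^'d \<Rightarrow> real^('d wo)" where "tow x = (\<chi> i. x $ repw i)"
definition fromw :: "real^('d wo) \<Rightarrow> real^'d" where "fromw y = (\<chi> j. y $ absw j)"

lemma tow_fromw[simp]: "tow (fromw y) = y" by (simp add: tow_def fromw_def repw_inverse vec_eq_iff)
lemma fromw_tow[simp]: "fromw (tow x) = x" by (simp add: tow_def fromw_def absw_inverse vec_eq_iff)

lemma linear_tow: "linear tow"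
  by (rule linearI) (auto simp: tow_def vec_eq_iff)
lemma linear_fromw: "linear fromw"
  by (rule linearI) (auto simp: fromw_def vec_eq_iff)

lemma tow_measurable[measurable]: "tow \<in> borel_measurable borel"
  using linear_tow by (intro borel_measurable_continuous_onI linear_continuous_on) (simp add: linear_conv_bounded_linear)

lemma fromw_measurable[measurable]: "fromw \<in> borel_measurable borel"
  using linear_fromw by (intro borel_measurable_continuous_onI linear_continuous_on) (simp add: linear_conv_bounded_linear)

lemma prod_wo: "(\<Prod>i\<in>UNIV. f (repw i)) = (\<Prod>j\<in>(UNIV::'d::finite set). (f j :: real))"
proof -
  have "bij_betw repw (UNIV :: 'd wo set) UNIV"
    by (metis bij_betw_def repw_inject inj_onI type_definition.Rep_range type_definition_wo)
  then show ?thesis by (rule prod.reindex_bij_betw)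
qed

lemma lborel_wo: "(lborel :: (real^('d::finite wo)) measure) = distr lborel borel tow"
proof (rule lborel_eqI)
  fix l u :: "real^('d wo)"
  assume le: "\<And>b. b \<in> Basis \<Longrightarrow> l \<bullet> b \<le> u \<bullet> b"
  have pre: "tow -` box l u = box (fromw l) (fromw u)"
    apply (auto simp: mem_box Basis_real_vec inner_axis1 tow_def fromw_def)
    subgoal for x i by (drule spec[of _ "absw i"], simp add: absw_inverse)
    subgoal for x i by (drule spec[of _ "absw i"], simp add: absw_inverse)
    subgoal for x i by (drule spec[of _ "repw i"], simp add: repw_inverse)
    subgoal for x i by (drule spec[of _ "repw i"], simp add: repw_inverse)
    done
  have le': "\<forall>b\<in>Basis. fromw l \<bullet> b \<le> fromw u \<bullet> b"
    using le unfolding Basis_real_vec by (auto simp: inner_axis1 fromw_def) (metis inner_axis1 rangeI)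
  have "emeasure (distr lborel borel tow) (box l u) = emeasure lborel (box (fromw l) (fromw u))"
    by (subst emeasure_distr) (auto simp: pre)
  also have "\<dots> = (\<Prod>b\<in>Basis. (fromw u - fromw l) \<bullet> b)"
    using le' by (simp add: emeasure_lborel_box_eq)
  also have "\<dots> = (\<Prod>b\<in>Basis. (u - l) \<bullet> b)"
    unfolding prod_Basis_vec inner_axis1
    using prod_wo[of "\<lambda>j. (fromw u - fromw l) $ j"]
    by (simp add: fromw_def repw_inverse)
  finally show "emeasure (distr lborel borel tow) (box l u) = (\<Prod>b\<in>Basis. (u - l) \<bullet> b)" .
qed simp



lemma bij_repw: "bij_betw (repw :: 'a wo \<Rightarrow> 'a) UNIV UNIV"
proof -
  have "inj repw" by (simp add: inj_on_def repw_inject)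
  moreover have "range repw = UNIV" using type_definition.Rep_range[OF type_definition_wo] .
  ultimately show ?thesis by (simp add: bij_betw_def)
qed

lemma bij_absw: "bij_betw (absw :: 'a \<Rightarrow> 'a wo) UNIV UNIV"
proof -
  have "inj absw" by (simp add: inj_on_def absw_inject)
  moreover have "surj absw" by (rule surjI[of absw repw]) (simp add: repw_inverse)
  ultimately show ?thesis by (simp add: bij_betw_def)
qed

definition matw :: "real^'d^'d \<Rightarrow> real^('d wo)^('d wo)" where
  "matw B = (\<chi> i j. B $ repw i $ repw j)"

lemma sign_wo:
  assumes "p permutes (UNIV :: 'd::finite set)"
  shows "sign (\<lambda>i. absw (p (repw i))) = sign p"
proof -
  have "permutes_bij_finite p (UNIV::'d set) (UNIV :: 'd wo set) absw repw"
    by unfold_locales (auto simp: assms bij_absw absw_inverse)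
  from permutes_bij_finite.sign_p'[OF this] show ?thesis by simp
qed

lemma permutes_wo:
  assumes "p permutes (UNIV :: 'd::finite set)"
  shows "(\<lambda>i. absw (p (repw i))) permutes (UNIV :: 'd wo set)"
proof -
  have "bij p" using assms permutes_bij by blast
  then have "bij (\<lambda>i. absw (p (repw i)))"
  proof -
    have "(\<lambda>i. absw (p (repw i))) = absw \<circ> p \<circ> repw" by auto
    then show ?thesis using bij_absw bij_repw \<open>bij p\<close> by (metis bij_comp)
  qed
  then show ?thesis by (simp add: bij_iff permutes_univ)
qed

lemma permutes_unwo:
  assumes "p permutes (UNIV :: 'd::finite wo set)"
  shows "(\<lambda>j. repw (p (absw j))) permutes (UNIV :: 'd set)"
proof -
  have "bij p" using assms permutes_bij by blast
  then have "bij (\<lambda>j. repw (p (absw j)))"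
  proof -
    have "(\<lambda>j. repw (p (absw j))) = repw \<circ> p \<circ> absw" by auto
    then show ?thesis using bij_absw bij_repw \<open>bij p\<close> by (metis bij_comp)
  qed
  then show ?thesis by (simp add: bij_iff permutes_univ)
qed

lemma det_matw: "det (matw B) = det (B :: real^'d::finite^'d)"
proof -
  let ?h = "\<lambda>p::'d \<Rightarrow> 'd. (\<lambda>i. absw (p (repw i)))"
  have bij: "bij_betw ?h {p. p permutes (UNIV::'d set)} {p. p permutes (UNIV::'d wo set)}"
    apply (rule bij_betw_byWitness[where f' = "\<lambda>p. (\<lambda>j. repw (p (absw j)))"])
    apply (auto simp: absw_inverse repw_inverse permutes_wo permutes_unwo)
    done
  have "det (matw B) = (\<Sum>p\<in>{p. p permutes (UNIV::'d wo set)}. of_int (sign p) * (\<Prod>i\<in>UNIV. matw B $ i $ p i))"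
    by (simp add: det_def)
  also have "\<dots> = (\<Sum>p\<in>{p. p permutes (UNIV::'d set)}. of_int (sign (?h p)) * (\<Prod>i\<in>UNIV. matw B $ i $ ?h p i))"
    by (rule sum.reindex_bij_betw[OF bij, symmetric])
  also have "\<dots> = (\<Sum>p\<in>{p. p permutes (UNIV::'d set)}. of_int (sign p) * (\<Prod>i\<in>UNIV. B $ i $ p i))"
  proof (rule sum.cong)
    fix p assume "p \<in> {p. p permutes (UNIV::'d set)}"
    then have pp: "p permutes (UNIV::'d set)" by simp
    have "(\<Prod>i\<in>UNIV. matw B $ i $ ?h p i) = (\<Prod>i\<in>UNIV. B $ repw i $ p (repw i))"
      by (simp add: matw_def absw_inverse)
    also have "\<dots> = (\<Prod>i\<in>UNIV. B $ i $ p i)"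
      by (rule prod_wo)
    finally show "of_int (sign (?h p)) * (\<Prod>i\<in>UNIV. matw B $ i $ ?h p i) = of_int (sign p) * (\<Prod>i\<in>UNIV. B $ i $ p i)"
      using sign_wo[OF pp] by simp
  qed simp
  also have "\<dots> = det B" by (simp add: det_def)
  finally show ?thesis .
qed

lemma tow_matw: "tow (B *v x) = matw B *v tow x"
proof -
  have "(\<Sum>j\<in>UNIV. B $ repw i $ j * x $ j) = (\<Sum>j\<in>UNIV. B $ repw i $ repw j * x $ repw j)" for i
    by (rule sum.reindex_bij_betw[OF bij_repw, symmetric])
  then show ?thesis by (simp add: tow_def matw_def matrix_vector_mult_def vec_eq_iff)
qed



lemma tow_image_eq: "tow ` X = fromw -` X"
  by (auto simp: image_iff) (metis tow_fromw)

lemma tow_image_borel: "X \<in> sets borel \<Longrightarrow> tow ` X \<in> sets borel"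
  unfolding tow_image_eq by (simp add: measurable_sets_borel[OF fromw_measurable])

lemma measure_tow: "X \<in> sets borel \<Longrightarrow> measure lborel (tow ` X) = measure lborel X"
proof -
  assume X: "X \<in> sets borel"
  have "measure lborel (tow ` X) = measure (distr lborel borel tow) (tow ` X)"
    by (simp add: lborel_wo[symmetric])
  also have "\<dots> = measure lborel (tow -` (tow ` X))"
    using tow_image_borel[OF X] by (subst measure_distr) auto
  also have "tow -` (tow ` X) = X" by (auto simp: image_iff) (metis fromw_tow)
  finally show ?thesis .
qed

lemma bounded_tow: "bounded X \<Longrightarrow> bounded (tow ` X)"
  by (metis bounded_linear_image linear_conv_bounded_linear linear_tow)

lemma measure_linear_image_d:
  fixes B :: "real^'d::finite^'d"
  assumes S: "S \<in> sets borel" "bounded S" and Bi: "invertible B"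
  shows "measure lborel ((\<lambda>x. B *v x) ` S) = \<bar>det B\<bar> * measure lborel S"
proof -
  obtain Bi' where Bi': "Bi' ** B = mat 1" "B ** Bi' = mat 1" using Bi invertible_def by blast
  have img: "(\<lambda>x. B *v x) ` S = (\<lambda>x. Bi' *v x) -` S"
    apply (auto simp: image_iff matrix_vector_mul_assoc Bi')
    by (metis Bi'(2) matrix_vector_mul_assoc matrix_vector_mul_lid)
  have lin: "linear ((*v) Bi')" by (simp add: matrix_vector_mul_linear)
  have mB: "(\<lambda>x. Bi' *v x) \<in> borel_measurable borel"
    using lin by (intro borel_measurable_continuous_onI linear_continuous_on) (simp add: linear_conv_bounded_linear)
  have BS: "(\<lambda>x. B *v x) ` S \<in> sets borel"
    unfolding img using mB S(1) by (simp add: measurable_sets_borel)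
  have eq: "tow ` ((\<lambda>x. B *v x) ` S) = (\<lambda>y. matw B *v y) ` (tow ` S)"
    by (auto simp: image_iff tow_matw)
  have S'l: "tow ` S \<in> lmeasurable"
    apply (rule bounded_set_imp_lmeasurable)
    using bounded_tow[OF S(2)] apply simp
    using tow_image_borel[OF S(1)] by (simp add: sets_completionI_sets)
  have "measure lborel ((\<lambda>x. B *v x) ` S) = measure lborel (tow ` ((\<lambda>x. B *v x) ` S))"
    using measure_tow[OF BS] by simp
  also have "\<dots> = measure lebesgue ((\<lambda>y. matw B *v y) ` (tow ` S))"
    unfolding eq using tow_image_borel[OF BS] eq by (simp add: measure_completion)
  also have "\<dots> = \<bar>det (matw B)\<bar> * measure lebesgue (tow ` S)"
    using measure_linear_image[OF matrix_vector_mul_linear S'l] by simp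
  also have "measure lebesgue (tow ` S) = measure lborel S"
    using tow_image_borel[OF S(1)] measure_tow[OF S(1)] by (simp add: measure_completion)
  finally show ?thesis by (simp add: det_matw)
qed



definition ucube :: "(real^'d::finite) set" where "ucube = {y. \<forall>i. 0 \<le> y$i \<and> y$i \<le> 1}"

lemma ucube_cbox: "ucube = cbox 0 1"
  by (auto simp: ucube_def mem_box_cart)

lemma cell_ucube: "cell B = (\<lambda>y. B *v y) ` ucube"
  by (simp add: cell_def ucube_def)

lemma ucube_borel[measurable]: "ucube \<in> sets borel" by (simp add: ucube_cbox)
lemma ucube_bounded: "bounded ucube" by (simp add: ucube_cbox)

lemma invertible_inv:
  assumes "invertible (B::real^'d::finite^'d)"
  obtains Bi where "Bi ** B = mat 1" "B ** Bi = mat 1"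
  using assms invertible_def by blast

lemma mv_measurable[measurable]: "(\<lambda>x. (B::real^'n::finite^'m::finite) *v x) \<in> borel_measurable borel"
  by (intro borel_measurable_continuous_onI linear_continuous_on) (simp add: linear_conv_bounded_linear)

lemma emeasure_linear_image_d:
  fixes B :: "real^'d::finite^'d"
  assumes S: "S \<in> sets borel" "bounded S" and Bi: "invertible B"
  shows "emeasure lborel ((\<lambda>x. B *v x) ` S) = ennreal \<bar>det B\<bar> * emeasure lborel S"
proof -
  have b2: "bounded ((\<lambda>x. B *v x) ` S)"
    using S(2) by (simp add: bounded_linear_image linear_conv_bounded_linear)
  have "emeasure lborel ((\<lambda>x. B *v x) ` S) = ennreal (measure lborel ((\<lambda>x. B *v x) ` S))"
    using emeasure_bounded_finite[OF b2] by (simp add: emeasure_eq_ennreal_measure)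
  also have "\<dots> = ennreal (\<bar>det B\<bar> * measure lborel S)"
    by (simp add: measure_linear_image_d[OF S Bi])
  also have "\<dots> = ennreal \<bar>det B\<bar> * emeasure lborel S"
    using emeasure_bounded_finite[OF S(2)] by (simp add: emeasure_eq_ennreal_measure ennreal_mult)
  finally show ?thesis .
qed

lemma cell_borel[measurable]:
  assumes "invertible (B::real^'d::finite^'d)" shows "cell B \<in> sets borel"
proof -
  obtain Bi where Bi: "Bi ** B = mat 1" "B ** Bi = mat 1" using invertible_inv[OF assms] by blast
  have "cell B = (\<lambda>x. Bi *v x) -` ucube"
    unfolding cell_ucube
    apply (auto simp: image_iff matrix_vector_mul_assoc Bi)
    by (metis Bi(2) matrix_vector_mul_assoc matrix_vector_mul_lid)
  then show ?thesis by (simp add: measurable_sets_borel[OF mv_measurable])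
qed

lemma cell_bounded: "bounded (cell (B::real^'d::finite^'d))"
  unfolding cell_ucube using ucube_bounded
  by (metis bounded_linear_image linear_conv_bounded_linear matrix_vector_mul_linear)

lemma cov_measure:
  fixes B :: "real^'d::finite^'d"
  assumes Bi: "invertible B"
  shows "density lborel (indicator (cell B)) =
         distr (density lborel (\<lambda>z. ennreal \<bar>det B\<bar> * indicator ucube z)) borel (\<lambda>z. B *v z)"
proof (rule measure_eqI)
  show "sets (density lborel (indicator (cell B))) =
        sets (distr (density lborel (\<lambda>z. ennreal \<bar>det B\<bar> * indicator ucube z)) borel (\<lambda>z. B *v z))"
    by simp
  fix A assume A: "A \<in> sets (density lborel (indicator (cell B)))"
  then have A': "A \<in> sets borel" by simp
  have cb: "cell B \<in> sets borel" using cell_borel[OF Bi] .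
  have "emeasure (density lborel (indicator (cell B))) A = emeasure lborel (cell B \<inter> A)"
  proof -
    have "emeasure (density lborel (indicator (cell B))) A = (\<integral>\<^sup>+x. indicator (cell B) x * indicator A x \<partial>lborel)"
      using A' cb by (intro emeasure_density) auto
    also have "\<dots> = (\<integral>\<^sup>+x. indicator (cell B \<inter> A) x \<partial>lborel)"
      by (intro nn_integral_cong) (simp split: split_indicator)
    also have "\<dots> = emeasure lborel (cell B \<inter> A)" using A' cb by simp
    finally show ?thesis .
  qed
  also have "cell B \<inter> A = (\<lambda>x. B *v x) ` (ucube \<inter> (\<lambda>z. B *v z) -` A)"
    unfolding cell_ucube by auto
  also have "emeasure lborel \<dots> = ennreal \<bar>det B\<bar> * emeasure lborel (ucube \<inter> (\<lambda>z. B *v z) -` A)"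
    apply (rule emeasure_linear_image_d[OF _ _ Bi])
    using A' apply (simp add: measurable_sets_borel[OF mv_measurable])
    using ucube_bounded by (meson Int_lower1 bounded_subset)
  also have "\<dots> = emeasure (distr (density lborel (\<lambda>z. ennreal \<bar>det B\<bar> * indicator ucube z)) borel (\<lambda>z. B *v z)) A"
  proof -
    have pm: "(\<lambda>z. B *v z) -` A \<in> sets borel" using A' by (simp add: measurable_sets_borel[OF mv_measurable])
    have "emeasure (density lborel (\<lambda>z. ennreal \<bar>det B\<bar> * indicator ucube z)) ((\<lambda>z. B *v z) -` A)
       = (\<integral>\<^sup>+z. ennreal \<bar>det B\<bar> * indicator ucube z * indicator ((\<lambda>z. B *v z) -` A) z \<partial>lborel)"
      using pm by (intro emeasure_density) auto
    also have "\<dots> = (\<integral>\<^sup>+z. ennreal \<bar>det B\<bar> * indicator (ucube \<inter> (\<lambda>z. B *v z) -` A) z \<partial>lborel)"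
      by (intro nn_integral_cong) (simp split: split_indicator)
    also have "\<dots> = ennreal \<bar>det B\<bar> * emeasure lborel (ucube \<inter> (\<lambda>z. B *v z) -` A)"
      using pm by (subst nn_integral_cmult) auto
    finally have "emeasure (density lborel (\<lambda>z. ennreal \<bar>det B\<bar> * indicator ucube z)) ((\<lambda>z. B *v z) -` A)
       = ennreal \<bar>det B\<bar> * emeasure lborel (ucube \<inter> (\<lambda>z. B *v z) -` A)" .
    then show ?thesis using A' by (simp add: emeasure_distr)
  qed
  finally show "emeasure (density lborel (indicator (cell B))) A =
    emeasure (distr (density lborel (\<lambda>z. ennreal \<bar>det B\<bar> * indicator ucube z)) borel (\<lambda>z. B *v z)) A" .
qed

lemma cov_cell:
  fixes B :: "real^'d::finite^'d" and g :: "real^'d \<Rightarrow> 'b::{banach,second_countable_topology}"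
  assumes Bi: "invertible B" and g[measurable]: "g \<in> borel_measurable borel"
  shows "(LINT x:cell B|lborel. g x) = \<bar>det B\<bar> *\<^sub>R (LINT z:ucube|lborel. g (B *v z))"
proof -
  have cb[measurable]: "cell B \<in> sets borel" using cell_borel[OF Bi] .
  have fe1: "(\<lambda>x. ennreal (indicator (cell B) x)) = indicator (cell B)"
    by (auto simp: fun_eq_iff split: split_indicator)
  have fe: "(\<lambda>z. ennreal \<bar>det B\<bar> * indicator ucube z) = (\<lambda>z. ennreal (\<bar>det B\<bar> * indicator ucube z))"
    by (auto simp: fun_eq_iff ennreal_mult split: split_indicator)
  have "(LINT x:cell B|lborel. g x) = integral\<^sup>L (density lborel (\<lambda>x. ennreal (indicator (cell B) x))) g"
    unfolding set_lebesgue_integral_def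
    by (subst integral_density) auto
  also have "\<dots> = integral\<^sup>L (density lborel (\<lambda>z. ennreal (\<bar>det B\<bar> * indicator ucube z))) (\<lambda>z. g (B *v z))"
    unfolding fe1 cov_measure[OF Bi] fe[symmetric]
    by (subst integral_distr) auto
  also have "\<dots> = integral\<^sup>L lborel (\<lambda>z. (\<bar>det B\<bar> * indicator ucube z) *\<^sub>R g (B *v z))"
    by (subst integral_density) auto
  also have "\<dots> = \<bar>det B\<bar> *\<^sub>R (LINT z:ucube|lborel. g (B *v z))"
    unfolding set_lebesgue_integral_def by (simp add: scaleR_scaleR[symmetric] del: scaleR_scaleR)
  finally show ?thesis .
qed



lemma lborel_integral_prod:
  fixes h :: "'a::euclidean_space \<Rightarrow> real \<Rightarrow> complex"
  assumes int: "\<And>b. b \<in> Basis \<Longrightarrow> integrable lborel (h b)"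
  shows "integral\<^sup>L lborel (\<lambda>x. \<Prod>b\<in>Basis. h b (x \<bullet> b)) = (\<Prod>b\<in>Basis. integral\<^sup>L lborel (h b))"
proof -
  interpret product_sigma_finite "\<lambda>_. lborel" by standard
  have hm[measurable]: "\<And>b. b \<in> Basis \<Longrightarrow> h b \<in> borel_measurable borel"
    using int by (simp add: borel_measurable_integrable)
  have m: "(\<lambda>x. \<Prod>b\<in>Basis. h b (x \<bullet> b)) \<in> borel_measurable borel"
    by (intro borel_measurable_prod) (auto intro: measurable_compose[OF _ hm])
  have "integral\<^sup>L lborel (\<lambda>x. \<Prod>b\<in>Basis. h b (x \<bullet> b)) =
        integral\<^sup>L (\<Pi>\<^sub>M b\<in>Basis. lborel) (\<lambda>f. \<Prod>b\<in>Basis. h b ((\<Sum>c\<in>(Basis::'a set). f c *\<^sub>R c) \<bullet> b))"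
    by (subst lborel_eq) (rule integral_distr[OF _ m], simp)
  also have "\<dots> = integral\<^sup>L (\<Pi>\<^sub>M b\<in>Basis. lborel) (\<lambda>f. \<Prod>b\<in>Basis. h b (f b))"
  proof (rule Bochner_Integration.integral_cong[OF refl])
    fix f :: "'a \<Rightarrow> real" assume "f \<in> space (\<Pi>\<^sub>M b\<in>Basis. (lborel::real measure))"
    have "(\<Sum>c\<in>(Basis::'a set). f c *\<^sub>R c) \<bullet> b = f b" if "b \<in> Basis" for b
      using that by (simp add: inner_sum_left inner_Basis if_distrib cong: if_cong)
    then show "(\<Prod>b\<in>Basis. h b ((\<Sum>c\<in>(Basis::'a set). f c *\<^sub>R c) \<bullet> b)) = (\<Prod>b\<in>Basis. h b (f b))"
      by (intro prod.cong) auto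
  qed
  also have "\<dots> = (\<Prod>b\<in>Basis. integral\<^sup>L lborel (h b))"
    by (rule product_integral_prod) (auto intro: int)
  finally show ?thesis .
qed

lemma exp_int_1d:
  fixes c :: real
  assumes "exp (\<i> * complex_of_real c) = 1"
  shows "integral\<^sup>L lborel (\<lambda>s. indicator {0..1} s *\<^sub>R exp (\<i> * complex_of_real (c * s))) = (if c = 0 then 1 else 0)"
proof (cases "c = 0")
  case True
  have "integral\<^sup>L lborel (\<lambda>s::real. indicator {0..1} s *\<^sub>R (1::complex)) = (\<lambda>s. complex_of_real s) 1 - (\<lambda>s. complex_of_real s) 0"
    apply (rule integral_FTC_atLeastAtMost)
    apply simp
    apply (auto intro!: derivative_eq_intros simp: has_vector_derivative_def has_derivative_of_real)
    apply (simp add: fun_eq_iff of_real_def)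
    done
  then show ?thesis using True by simp
next
  case False
  let ?F = "\<lambda>s. exp (\<i> * complex_of_real (c * s)) / (\<i> * complex_of_real c)"
  have "integral\<^sup>L lborel (\<lambda>s. indicator {0..1} s *\<^sub>R exp (\<i> * complex_of_real (c * s))) = ?F 1 - ?F 0"
  proof (rule integral_FTC_atLeastAtMost)
    fix x :: real
    have "((\<lambda>z. exp (\<i> * complex_of_real c * z) / (\<i> * complex_of_real c)) has_field_derivative
          exp (\<i> * complex_of_real c * complex_of_real x)) (at (complex_of_real x))"
      using False by (auto intro!: derivative_eq_intros simp: field_simps)
    then have "((\<lambda>s. exp (\<i> * complex_of_real c * complex_of_real s) / (\<i> * complex_of_real c)) has_vector_derivative
          exp (\<i> * complex_of_real c * complex_of_real x)) (at x within {0..1})"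
      by (rule has_vector_derivative_real_field)
    then show "(?F has_vector_derivative exp (\<i> * complex_of_real (c * x))) (at x within {0..1})"
      by (simp add: mult.assoc)
  next
    show "continuous_on {0..1} (\<lambda>s. exp (\<i> * complex_of_real (c * s)))"
      by (intro continuous_intros)
  qed simp
  then show ?thesis using False assms by simp
qed



lemma recip_col:
  assumes "k \<in> recip (B::real^'d::finite^'d)"
  shows "exp (\<i> * complex_of_real (k \<bullet> (B *v axis j 1))) = 1"
proof -
  have "B *v axis j 1 \<in> lattice B"
    unfolding lattice_def
  proof (rule range_eqI[where x="axis j 1"])
    have e: "(\<chi> i. real_of_int ((axis j 1 :: int^'d) $ i)) = axis j 1" by (simp add: vec_eq_iff axis_def)
    show "B *v axis j 1 = B *v (\<chi> i. real_of_int ((axis j 1 :: int^'d) $ i))" by (simp only: e)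
  qed
  with assms have "exp (\<i> * complex_of_real (k \<bullet> (0 + B *v axis j 1))) = exp (\<i> * complex_of_real (k \<bullet> 0))"
    unfolding recip_def by blast
  then show ?thesis by simp
qed

lemma recip_zero: "0 \<in> recip B" by (simp add: recip_def)

lemma recip_diff:
  fixes k k' :: "real^'d::finite" and B :: "real^'d^'d"
  assumes "k \<in> recip B" "k' \<in> recip B" shows "k - k' \<in> recip B"
proof -
  have "\<forall>lam\<in>lattice B. \<forall>x. exp (\<i> * complex_of_real ((k - k') \<bullet> (x + lam))) = exp (\<i> * complex_of_real ((k - k') \<bullet> x))"
proof (intro ballI allI)
  fix lam x :: "real^'d" assume lam: "lam \<in> lattice B"
  have e: "exp (\<i> * complex_of_real ((q::real^'d) \<bullet> y)) = exp (\<i> * complex_of_real (q \<bullet> x)) * exp (\<i> * complex_of_real (q \<bullet> (y - x)))" for q y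
    by (simp add: exp_add[symmetric] algebra_simps inner_diff_right)
  have "exp (\<i> * complex_of_real (k \<bullet> (x + lam))) = exp (\<i> * complex_of_real (k \<bullet> x))"
    "exp (\<i> * complex_of_real (k' \<bullet> (x + lam))) = exp (\<i> * complex_of_real (k' \<bullet> x))"
    using assms lam unfolding recip_def by blast+
  then have "exp (\<i> * complex_of_real (k \<bullet> lam)) = 1" "exp (\<i> * complex_of_real (k' \<bullet> lam)) = 1"
    using e[of k "x + lam"] e[of k' "x + lam"] by auto
  then show "exp (\<i> * complex_of_real ((k - k') \<bullet> (x + lam))) = exp (\<i> * complex_of_real ((k - k') \<bullet> x))"
    using e[of "k - k'" "x + lam"]
    by (simp add: inner_diff_left algebra_simps exp_diff)
qed
  then show ?thesis by (simp add: recip_def)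
qed

lemma ucube_Basis: "z \<in> ucube \<longleftrightarrow> (\<forall>b\<in>Basis. z \<bullet> b \<in> {0..(1::real)})"
  by (auto simp: ucube_def Basis_real_vec inner_axis1)

lemma cube_exp:
  fixes m :: "real^'d::finite"
  assumes m: "\<And>j. exp (\<i> * complex_of_real (m $ j)) = 1"
  shows "(LINT z:ucube|lborel. exp (\<i> * complex_of_real (m \<bullet> z))) = (if m = 0 then 1 else 0)"
proof -
  define h where "h b s = complex_of_real (indicator {0..1} s) * exp (\<i> * complex_of_real ((m \<bullet> b) * s))" for b s
  have hint: "integrable lborel (h b)" for b
  proof -
    have "integrable lborel (\<lambda>s. indicator {0..1::real} s *\<^sub>R exp (\<i> * complex_of_real ((m \<bullet> b) * s)))"
      by (rule borel_integrable_compact) (simp, intro continuous_intros)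
    then show ?thesis unfolding h_def by (simp add: scaleR_conv_of_real)
  qed
  have hval: "integral\<^sup>L lborel (h b) = (if m \<bullet> b = 0 then 1 else 0)" if "b \<in> Basis" for b
  proof -
    from that have "b \<in> range (\<lambda>i. axis i 1)" by (simp add: Basis_real_vec)
    then obtain j where b: "b = axis j 1" by auto
    have "integral\<^sup>L lborel (h b) = integral\<^sup>L lborel (\<lambda>s. indicator {0..1} s *\<^sub>R exp (\<i> * complex_of_real ((m \<bullet> b) * s)))"
      unfolding h_def by (simp add: scaleR_conv_of_real)
    also have "\<dots> = (if m \<bullet> b = 0 then 1 else 0)"
      by (rule exp_int_1d) (simp add: b inner_axis1 m)
    finally show ?thesis .
  qed
  have eq: "indicator ucube z *\<^sub>R exp (\<i> * complex_of_real (m \<bullet> z)) = (\<Prod>b\<in>Basis. h b (z \<bullet> b))" for z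
  proof -
    have "(\<Prod>b\<in>Basis. h b (z \<bullet> b)) = (\<Prod>b\<in>Basis. complex_of_real (indicator {0..1} (z \<bullet> b))) *
        (\<Prod>b\<in>Basis. exp (\<i> * complex_of_real ((m \<bullet> b) * (z \<bullet> b))))"
      unfolding h_def by (rule prod.distrib)
    also have "(\<Prod>b\<in>Basis. exp (\<i> * complex_of_real ((m \<bullet> b) * (z \<bullet> b)))) = exp (\<i> * complex_of_real (m \<bullet> z))"
      by (subst euclidean_inner[of m z]) (simp add: exp_sum[symmetric] sum_distrib_left)
    also have "(\<Prod>b\<in>Basis. complex_of_real (indicator {0..1} (z \<bullet> b))) = complex_of_real (indicator ucube z)"
    proof (cases "z \<in> ucube")
      case True then show ?thesis by (simp add: ucube_Basis)
    next
      case False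
      then obtain b where b: "b \<in> Basis" "z \<bullet> b \<notin> {0..1}" by (auto simp: ucube_Basis)
      have "(\<Prod>b\<in>Basis. complex_of_real (indicator {0..1} (z \<bullet> b))) = 0"
        by (rule prod_zero) (use b in \<open>auto intro!: bexI[of _ b] simp: indicator_def\<close>)
      then show ?thesis using False by simp
    qed
    finally show ?thesis by (simp add: scaleR_conv_of_real)
  qed
  have "(LINT z:ucube|lborel. exp (\<i> * complex_of_real (m \<bullet> z))) = integral\<^sup>L lborel (\<lambda>z. \<Prod>b\<in>Basis. h b (z \<bullet> b))"
    unfolding set_lebesgue_integral_def eq ..
  also have "\<dots> = (\<Prod>b\<in>Basis. integral\<^sup>L lborel (h b))"
    by (rule lborel_integral_prod[OF hint])
  also have "\<dots> = (\<Prod>b\<in>Basis. (if m \<bullet> b = 0 then 1 else 0))"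
    by (rule prod.cong) (auto simp: hval)
  also have "\<dots> = (if m = 0 then 1 else 0)"
  proof (cases "m = 0")
    case True then show ?thesis by simp
  next
    case False
    then obtain b where b: "b \<in> Basis" "m \<bullet> b \<noteq> 0" using euclidean_all_zero_iff by blast
    have "(\<Prod>b\<in>Basis. (if m \<bullet> b = 0 then 1 else 0::complex)) = 0"
      by (rule prod_zero) (use b in auto)
    then show ?thesis using False by simp
  qed
  finally show ?thesis .
qed

lemma orth:
  fixes B :: "real^'d::finite^'d"
  assumes Bi: "invertible B" and k: "k \<in> recip B"
  shows "(LINT x:cell B|lborel. exp (\<i> * complex_of_real (k \<bullet> x))) = (if k = 0 then complex_of_real \<bar>det B\<bar> else 0)"
proof -
  have "(LINT x:cell B|lborel. exp (\<i> * complex_of_real (k \<bullet> x))) =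
        \<bar>det B\<bar> *\<^sub>R (LINT z:ucube|lborel. exp (\<i> * complex_of_real (k \<bullet> (B *v z))))"
    by (rule cov_cell[OF Bi]) measurable
  also have "(\<lambda>z. exp (\<i> * complex_of_real (k \<bullet> (B *v z)))) = (\<lambda>z. exp (\<i> * complex_of_real ((k v* B) \<bullet> z)))"
    by (simp add: dot_lmul_matrix)
  also have "(LINT z:ucube|lborel. exp (\<i> * complex_of_real ((k v* B) \<bullet> z))) = (if k v* B = 0 then 1 else 0)"
  proof (rule cube_exp)
    fix j
    have "(k v* B) $ j = (k v* B) \<bullet> axis j 1" by (simp add: inner_axis1)
    also have "\<dots> = k \<bullet> (B *v axis j 1)" by (rule dot_lmul_matrix)
    finally show "exp (\<i> * complex_of_real ((k v* B) $ j)) = 1" using recip_col[OF k] by simp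
  qed
  also have "(k v* B = 0) = (k = 0)"
  proof
    assume "k v* B = 0"
    obtain Bi' where "B ** Bi' = mat 1" using Bi invertible_def by blast
    then have "k = (k v* B) v* Bi'" by (simp add: vector_matrix_mul_assoc)
    then show "k = 0" using \<open>k v* B = 0\<close> by simp
  qed simp
  finally show ?thesis by (simp add: scaleR_conv_of_real)
qed



definition ee :: "real^'d::finite \<Rightarrow> real^'d \<Rightarrow> complex" where
  "ee k x = exp (\<i> * complex_of_real (k \<bullet> x))"

lemma norm_ee[simp]: "cmod (ee k x) = 1"
  by (simp add: ee_def)

lemma ee_cnj_mult: "cnj (ee k x) * ee k' x = ee (k' - k) x"
  by (simp add: ee_def exp_cnj exp_add[symmetric] inner_diff_left algebra_simps)

lemma cnj_ee: "cnj (ee k x) = ee (- k) x"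
  by (simp add: ee_def exp_cnj)

lemma continuous_ee[continuous_intros]: "continuous_on A (ee k)"
  unfolding ee_def by (intro continuous_intros)

lemma ee_measurable[measurable]: "ee k \<in> borel_measurable borel"
  by (intro borel_measurable_continuous_onI continuous_ee)

lemma cell_finite: "emeasure lborel (cell (B::real^'d::finite^'d)) < \<infinity>"
  by (rule emeasure_bounded_finite[OF cell_bounded])

lemma set_integrable_bounded:
  fixes g :: "real^'d::finite \<Rightarrow> 'b::{banach,second_countable_topology}"
  assumes Bi: "invertible (B::real^'d^'d)" and g: "g \<in> borel_measurable borel" and K: "\<And>x. norm (g x) \<le> K"
  shows "set_integrable lborel (cell B) g"
proof (rule set_integrable_bound[where f="\<lambda>_. K"])
  have "integrable lborel (indicat_real (cell B))"
    using cell_finite cell_borel[OF Bi] by (intro integrable_real_indicator) auto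
  then show "set_integrable lborel (cell B) (\<lambda>_. K)"
    unfolding set_integrable_def by (intro integrable_scaleR_left) simp
  show "set_borel_measurable lborel (cell B) g"
    unfolding set_borel_measurable_def using g cell_borel[OF Bi] by measurable
  show "AE x in lborel. x \<in> cell B \<longrightarrow> norm (g x) \<le> norm K"
    using K by (auto intro: order_trans[OF _ abs_ge_self])
qed

lemma set_integrable_dom:
  fixes g :: "real^'d::finite \<Rightarrow> 'b::{banach,second_countable_topology}" and f :: "real^'d \<Rightarrow> real"
  assumes Bi: "invertible (B::real^'d^'d)" and g: "g \<in> borel_measurable borel"
    and f: "set_integrable lborel (cell B) f" and le: "\<And>x. norm (g x) \<le> f x"
  shows "set_integrable lborel (cell B) g"
proof (rule set_integrable_bound[OF f])
  show "set_borel_measurable lborel (cell B) g"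
    unfolding set_borel_measurable_def using g cell_borel[OF Bi] by measurable
  show "AE x in lborel. x \<in> cell B \<longrightarrow> norm (g x) \<le> norm (f x)"
    using le by (auto intro: order_trans[OF _ abs_ge_self])
qed

lemma set_integral_norm_le:
  fixes f :: "'a \<Rightarrow> 'b::{banach,second_countable_topology}"
  assumes "set_integrable M A f" "set_integrable M A g" "\<And>x. x \<in> A \<Longrightarrow> norm (f x) \<le> g x"
  shows "norm (LINT x:A|M. f x) \<le> (LINT x:A|M. g x)"
proof -
  have "norm (LINT x:A|M. f x) \<le> integral\<^sup>L M (\<lambda>x. norm (indicator A x *\<^sub>R f x))"
    unfolding set_lebesgue_integral_def by (rule integral_norm_bound)
  also have "\<dots> \<le> (LINT x:A|M. g x)"
  proof -
    have i1: "integrable M (\<lambda>x. norm (indicator A x *\<^sub>R f x))"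
      using assms(1) unfolding set_integrable_def by (rule integrable_norm)
    have i2: "integrable M (\<lambda>x. indicator A x *\<^sub>R g x)"
      using assms(2) unfolding set_integrable_def .
    show ?thesis unfolding set_lebesgue_integral_def
      by (rule integral_mono[OF i1 i2]) (use assms(3) in \<open>auto split: split_indicator\<close>)
  qed
  finally show ?thesis .
qed

lemma set_integral_sum:
  fixes f :: "'i \<Rightarrow> 'a \<Rightarrow> 'b::{banach,second_countable_topology}"
  assumes "\<And>i. i \<in> I \<Longrightarrow> set_integrable M A (f i)"
  shows "(LINT x:A|M. (\<Sum>i\<in>I. f i x)) = (\<Sum>i\<in>I. (LINT x:A|M. f i x))"
  using assms unfolding set_lebesgue_integral_def set_integrable_def
  by (simp add: scaleR_sum_right integral_sum)

lemma set_integrable_sum: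
  fixes f :: "'i \<Rightarrow> 'a \<Rightarrow> 'b::{banach,second_countable_topology}"
  assumes "\<And>i. i \<in> I \<Longrightarrow> set_integrable M A (f i)"
  shows "set_integrable M A (\<lambda>x. \<Sum>i\<in>I. f i x)"
  using assms unfolding set_integrable_def
  by (simp add: scaleR_sum_right)

lemma det_pos: "invertible (B::real^'d::finite^'d) \<Longrightarrow> \<bar>det B\<bar> > 0"
  by (simp add: invertible_det_nz)

lemma orth2:
  fixes B :: "real^'d::finite^'d"
  assumes Bi: "invertible B" and k: "k \<in> recip B" and k': "k' \<in> recip B"
  shows "(LINT x:cell B|lborel. cnj (ee k x) * ee k' x) = (if k = k' then complex_of_real \<bar>det B\<bar> else 0)"
  unfolding ee_cnj_mult using orth[OF Bi recip_diff[OF k' k]] by (auto simp: ee_def)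

lemma amgm: "cmod a * cmod b \<le> e / 2 * (cmod b)^2 + (cmod a)^2 / (2 * e)" if "e > 0" for a b :: complex
proof -
  have "0 \<le> (e * cmod b - cmod a)^2" by simp
  then have "2 * e * (cmod a * cmod b) \<le> e^2 * (cmod b)^2 + (cmod a)^2"
    by (simp add: power2_eq_square algebra_simps)
  then show ?thesis using that by (simp add: field_simps power2_eq_square)
qed

lemma tendsto_from_bound:
  fixes c :: "'i \<Rightarrow> 'b::real_normed_vector"
  assumes d: "(\<delta> \<longlongrightarrow> 0) F" and M: "M \<ge> 0"
    and b: "\<And>e. e > 0 \<Longrightarrow> eventually (\<lambda>i. norm (c i - L) \<le> e * M + (e + 1/e) * \<delta> i) F"
  shows "(c \<longlongrightarrow> L) F"
proof (rule tendstoI)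
  fix eta :: real assume eta: "eta > 0"
  define e where "e = eta / (2 * (M + 1))"
  have e: "e > 0" using eta M by (simp add: e_def)
  have eM: "e * M < eta / 2" using eta M by (simp add: e_def field_simps)
  have p4: "eta / (4 * (e + 1/e)) > 0" using e eta by (simp add: add_pos_pos)
  have "eventually (\<lambda>i. \<bar>\<delta> i\<bar> < eta / (4 * (e + 1/e))) F"
    using tendstoD[OF d p4] by (simp add: dist_real_def)
  with b[OF e] show "eventually (\<lambda>i. dist (c i) L < eta) F"
  proof eventually_elim
    case (elim i)
    have pos: "e + 1/e > 0" using e by (simp add: add_pos_pos)
    have "(e + 1/e) * \<delta> i \<le> (e + 1/e) * \<bar>\<delta> i\<bar>" using pos by (simp add: mult_left_mono)
    also have "\<dots> \<le> (e + 1/e) * (eta / (4 * (e + 1/e)))" using elim(2) pos by (intro mult_left_mono) auto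
    also have "\<dots> = eta / 4" using pos by (simp add: field_simps)
    finally have X: "(e + 1/e) * \<delta> i \<le> eta / 4" .
    show ?case unfolding dist_norm using elim(1) eM eta X by linarith
  qed
qed



definition sapprox :: "real^'d::finite^'d \<Rightarrow> (real^'d \<Rightarrow> complex) \<Rightarrow> (real^'d \<Rightarrow> complex) \<Rightarrow> bool" where
  "sapprox B u \<alpha> \<longleftrightarrow> u \<in> borel_measurable borel \<and> set_integrable lborel (cell B) (\<lambda>x. (cmod (u x))^2) \<and>
     ((\<lambda>F. LINT x:cell B|lborel. (cmod (u x - (\<Sum>k\<in>F. ee k x * \<alpha> k)))^2) \<longlongrightarrow> 0) (finite_subsets_at_top (recip B))"

lemma const_set_integrable:
  assumes "invertible (B::real^'d::finite^'d)"
  shows "set_integrable lborel (cell B) (\<lambda>_. (K::real))"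
  by (rule set_integrable_bounded[OF assms, of _ "\<bar>K\<bar>"]) auto

lemma sum_ee_measurable[measurable]: "(\<lambda>x. \<Sum>k\<in>F. ee k x * \<alpha> k) \<in> borel_measurable borel"
  by measurable

lemma norm_sum_ee: "cmod (\<Sum>k\<in>F. ee k x * \<alpha> k) \<le> (\<Sum>k\<in>F. cmod (\<alpha> k))"
  by (rule order_trans[OF norm_sum]) (simp add: norm_mult)

lemma sq_diff_le: "(cmod (a - b))^2 \<le> 2 * (cmod a)^2 + 2 * (cmod b)^2"
proof -
  have "cmod (a - b) \<le> cmod a + cmod b" by (rule norm_triangle_ineq4)
  then have "(cmod (a - b))^2 \<le> (cmod a + cmod b)^2" by (simp add: power_mono)
  also have "\<dots> \<le> 2 * (cmod a)^2 + 2 * (cmod b)^2"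
    using sum_squares_ge_zero[of "cmod a - cmod b" 0] by (simp add: power2_eq_square algebra_simps)
  finally show ?thesis .
qed

lemma approx_integrable:
  assumes Bi: "invertible (B::real^'d::finite^'d)" and um: "u \<in> borel_measurable borel"
    and u2: "set_integrable lborel (cell B) (\<lambda>x. (cmod (u x))^2)"
  shows "set_integrable lborel (cell B) (\<lambda>x. (cmod (u x - (\<Sum>k\<in>F. ee k x * \<alpha> k)))^2)"
proof (rule set_integrable_dom[OF Bi _ _ ])
  let ?A = "\<Sum>k\<in>F. cmod (\<alpha> k)"
  show "(\<lambda>x. (cmod (u x - (\<Sum>k\<in>F. ee k x * \<alpha> k)))^2) \<in> borel_measurable borel" using um by measurable
  show "set_integrable lborel (cell B) (\<lambda>x. 2 * (cmod (u x))^2 + 2 * ?A^2)"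
    using u2 const_set_integrable[OF Bi] by (intro set_integral_add) auto
  fix x
  have "(cmod (\<Sum>k\<in>F. ee k x * \<alpha> k))^2 \<le> ?A^2"
    using norm_sum_ee by (intro power_mono) auto
  then show "norm ((cmod (u x - (\<Sum>k\<in>F. ee k x * \<alpha> k)))^2) \<le> 2 * (cmod (u x))^2 + 2 * ?A^2"
    using sq_diff_le[of "u x" "\<Sum>k\<in>F. ee k x * \<alpha> k"] by simp
qed

lemma set_integral_nonneg':
  fixes f :: "_ \<Rightarrow> real"
  shows "(\<And>x. 0 \<le> f x) \<Longrightarrow> 0 \<le> (LINT x:A|M. f x)"
  unfolding set_lebesgue_integral_def by (intro integral_nonneg_AE) (auto simp: indicator_def)

lemma sum_cnj_mult_integral:
  fixes B :: "real^'d::finite^'d"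
  assumes Bi: "invertible B" and F: "finite F" "F \<subseteq> recip B"
  shows "(LINT x:cell B|lborel. cnj (\<Sum>k\<in>F. ee k x * \<alpha> k) * (\<Sum>k\<in>F. ee k x * \<beta> k))
         = complex_of_real \<bar>det B\<bar> * (\<Sum>k\<in>F. cnj (\<alpha> k) * \<beta> k)"
proof -
  have ib: "set_integrable lborel (cell B) (\<lambda>x. c * (cnj (ee k x) * ee k' x))" for c k k'
    by (rule set_integrable_bounded[OF Bi, of _ "cmod c"]) (auto simp: norm_mult intro!: borel_measurable_continuous_onI continuous_intros)
  have "(\<lambda>x. cnj (\<Sum>k\<in>F. ee k x * \<alpha> k) * (\<Sum>k\<in>F. ee k x * \<beta> k)) =
        (\<lambda>x. \<Sum>k\<in>F. \<Sum>k'\<in>F. (cnj (\<alpha> k) * \<beta> k') * (cnj (ee k x) * ee k' x))"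
  proof
    fix x
    have "cnj (\<Sum>k\<in>F. ee k x * \<alpha> k) * (\<Sum>k\<in>F. ee k x * \<beta> k) =
          (\<Sum>k\<in>F. cnj (ee k x * \<alpha> k)) * (\<Sum>k'\<in>F. ee k' x * \<beta> k')" by (simp add: cnj_sum)
    also have "\<dots> = (\<Sum>k\<in>F. \<Sum>k'\<in>F. cnj (ee k x * \<alpha> k) * (ee k' x * \<beta> k'))" by (rule sum_product)
    also have "\<dots> = (\<Sum>k\<in>F. \<Sum>k'\<in>F. (cnj (\<alpha> k) * \<beta> k') * (cnj (ee k x) * ee k' x))"
      by (intro sum.cong refl) (simp add: mult_ac)
    finally show "cnj (\<Sum>k\<in>F. ee k x * \<alpha> k) * (\<Sum>k\<in>F. ee k x * \<beta> k) =
          (\<Sum>k\<in>F. \<Sum>k'\<in>F. (cnj (\<alpha> k) * \<beta> k') * (cnj (ee k x) * ee k' x))" .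
  qed
  then have "(LINT x:cell B|lborel. cnj (\<Sum>k\<in>F. ee k x * \<alpha> k) * (\<Sum>k\<in>F. ee k x * \<beta> k))
       = (\<Sum>k\<in>F. \<Sum>k'\<in>F. (LINT x:cell B|lborel. (cnj (\<alpha> k) * \<beta> k') * (cnj (ee k x) * ee k' x)))"
    by (simp only: set_integral_sum[OF set_integrable_sum[OF ib]] set_integral_sum[OF ib])
  also have "\<dots> = (\<Sum>k\<in>F. \<Sum>k'\<in>F. (cnj (\<alpha> k) * \<beta> k') * (if k = k' then complex_of_real \<bar>det B\<bar> else 0))"
    using F by (intro sum.cong refl) (auto simp: orth2[OF Bi] subsetD)
  also have "\<dots> = complex_of_real \<bar>det B\<bar> * (\<Sum>k\<in>F. cnj (\<alpha> k) * \<beta> k)"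
    using F by (simp add: if_distrib sum_distrib_left mult.commute cong: if_cong)
  finally show ?thesis .
qed



lemma borel_measurable_cnj'[measurable]:
  fixes f :: "'a \<Rightarrow> complex"
  assumes "f \<in> borel_measurable M" shows "(\<lambda>x. cnj (f x)) \<in> borel_measurable M"
proof -
  have "(\<lambda>z::complex. cnj z) \<in> borel_measurable borel"
    by (intro borel_measurable_continuous_onI continuous_intros)
  then show ?thesis using measurable_compose[OF assms] by blast
qed

lemma SP:
  fixes B :: "real^'d::finite^'d"
  assumes Bi: "invertible B" and su: "sapprox B u \<alpha>" and sw: "sapprox B w \<beta>"
  shows "((\<lambda>F. complex_of_real \<bar>det B\<bar> * (\<Sum>k\<in>F. cnj (\<alpha> k) * \<beta> k)) \<longlongrightarrow> (LINT x:cell B|lborel. cnj (u x) * w x))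
           (finite_subsets_at_top (recip B))"
proof -
  let ?C = "cell B"
  have um[measurable]: "u \<in> borel_measurable borel" and u2: "set_integrable lborel ?C (\<lambda>x. (cmod (u x))^2)"
    and ul: "((\<lambda>F. LINT x:?C|lborel. (cmod (u x - (\<Sum>k\<in>F. ee k x * \<alpha> k)))^2) \<longlongrightarrow> 0) (finite_subsets_at_top (recip B))"
    using su unfolding sapprox_def by auto
  have wm[measurable]: "w \<in> borel_measurable borel" and w2: "set_integrable lborel ?C (\<lambda>x. (cmod (w x))^2)"
    and wl: "((\<lambda>F. LINT x:?C|lborel. (cmod (w x - (\<Sum>k\<in>F. ee k x * \<beta> k)))^2) \<longlongrightarrow> 0) (finite_subsets_at_top (recip B))"
    using sw unfolding sapprox_def by auto
  define Iu where "Iu = (LINT x:?C|lborel. (cmod (u x))^2)"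
  define Iw where "Iw = (LINT x:?C|lborel. (cmod (w x))^2)"
  define du where "du F = (LINT x:?C|lborel. (cmod (u x - (\<Sum>k\<in>F. ee k x * \<alpha> k)))^2)" for F
  define dw where "dw F = (LINT x:?C|lborel. (cmod (w x - (\<Sum>k\<in>F. ee k x * \<beta> k)))^2)" for F
  have Iu0: "Iu \<ge> 0" unfolding Iu_def by (rule set_integral_nonneg') simp
  have Iw0: "Iw \<ge> 0" unfolding Iw_def by (rule set_integral_nonneg') simp
  have du0: "du F \<ge> 0" for F unfolding du_def by (rule set_integral_nonneg') simp
  have dw0: "dw F \<ge> 0" for F unfolding dw_def by (rule set_integral_nonneg') simp
  have key: "norm (complex_of_real \<bar>det B\<bar> * (\<Sum>k\<in>F. cnj (\<alpha> k) * \<beta> k) - (LINT x:?C|lborel. cnj (u x) * w x))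
        \<le> e * (Iw / 2 + Iu) + (e + 1/e) * (du F + dw F)"
    if F: "finite F" "F \<subseteq> recip B" and e: "e > 0" for F e
  proof -
    define U where "U x = (\<Sum>k\<in>F. ee k x * \<alpha> k)" for x
    define W where "W x = (\<Sum>k\<in>F. ee k x * \<beta> k)" for x
    have Um[measurable]: "U \<in> borel_measurable borel" unfolding U_def by measurable
    have Wm[measurable]: "W \<in> borel_measurable borel" unfolding W_def by measurable
    have U2: "set_integrable lborel ?C (\<lambda>x. (cmod (U x))^2)"
      by (rule set_integrable_bounded[OF Bi, of _ "(\<Sum>k\<in>F. cmod (\<alpha> k))^2"])
        (auto simp: U_def intro!: power_mono norm_sum_ee)
    have dU2: "set_integrable lborel ?C (\<lambda>x. (cmod (u x - U x))^2)"
      unfolding U_def by (rule approx_integrable[OF Bi um u2])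
    have dW2: "set_integrable lborel ?C (\<lambda>x. (cmod (w x - W x))^2)"
      unfolding W_def by (rule approx_integrable[OF Bi wm w2])
    have UW: "set_integrable lborel ?C (\<lambda>x. cnj (U x) * W x)"
    proof (rule set_integrable_bounded[OF Bi, of _ "(\<Sum>k\<in>F. cmod (\<alpha> k)) * (\<Sum>k\<in>F. cmod (\<beta> k))"])
      show "(\<lambda>x. cnj (U x) * W x) \<in> borel_measurable borel" by measurable
      fix x
      have "cmod (cnj (U x) * W x) = cmod (U x) * cmod (W x)" by (simp add: norm_mult)
      also have "\<dots> \<le> (\<Sum>k\<in>F. cmod (\<alpha> k)) * (\<Sum>k\<in>F. cmod (\<beta> k))"
        unfolding U_def W_def by (intro mult_mono norm_sum_ee sum_nonneg) auto
      finally show "norm (cnj (U x) * W x) \<le> (\<Sum>k\<in>F. cmod (\<alpha> k)) * (\<Sum>k\<in>F. cmod (\<beta> k))" by simp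
    qed
    have dom: "cmod (cnj a * b) \<le> e / 2 * (cmod b)^2 + (cmod a)^2 / (2 * e)" for a b
      using amgm[OF e, of a b] by (simp add: norm_mult)
    have dom2: "cmod (cnj a * b) \<le> e / 2 * (cmod a)^2 + (cmod b)^2 / (2 * e)" for a b
      using dom[of b a] by (simp add: norm_mult mult.commute)
    have dom1: "cmod (cnj a * b) \<le> (cmod b)^2 / 2 + (cmod a)^2 / 2" for a b
      using amgm[of 1 a b] by (simp add: norm_mult)
    have T1i: "set_integrable lborel ?C (\<lambda>x. cnj (u x - U x) * w x)"
      by (rule set_integrable_dom[OF Bi _ _ dom1]) (measurable, intro set_integral_add set_integrable_divide dU2 w2)
    have T2i: "set_integrable lborel ?C (\<lambda>x. cnj (U x) * (w x - W x))"
      by (rule set_integrable_dom[OF Bi _ _ dom1]) (measurable, intro set_integral_add set_integrable_divide dW2 U2)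
    have uwi: "set_integrable lborel ?C (\<lambda>x. cnj (u x) * w x)"
      by (rule set_integrable_dom[OF Bi _ _ dom1]) (measurable, intro set_integral_add set_integrable_divide u2 w2)
    have split: "cnj (u x) * w x = cnj (U x) * W x + (cnj (u x - U x) * w x + cnj (U x) * (w x - W x))" for x
      by (simp add: algebra_simps)
    have "(LINT x:?C|lborel. cnj (u x) * w x) = (LINT x:?C|lborel. cnj (U x) * W x) +
           ((LINT x:?C|lborel. cnj (u x - U x) * w x) + (LINT x:?C|lborel. cnj (U x) * (w x - W x)))"
      unfolding split using UW T1i T2i by (simp add: set_integral_add)
    moreover have "(LINT x:?C|lborel. cnj (U x) * W x) = complex_of_real \<bar>det B\<bar> * (\<Sum>k\<in>F. cnj (\<alpha> k) * \<beta> k)"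
      unfolding U_def W_def by (rule sum_cnj_mult_integral[OF Bi F])
    ultimately have diff: "complex_of_real \<bar>det B\<bar> * (\<Sum>k\<in>F. cnj (\<alpha> k) * \<beta> k) - (LINT x:?C|lborel. cnj (u x) * w x)
        = - ((LINT x:?C|lborel. cnj (u x - U x) * w x) + (LINT x:?C|lborel. cnj (U x) * (w x - W x)))"
      by simp
    have b1: "norm (LINT x:?C|lborel. cnj (u x - U x) * w x) \<le> e / 2 * Iw + du F / (2 * e)"
    proof -
      have "norm (LINT x:?C|lborel. cnj (u x - U x) * w x) \<le>
            (LINT x:?C|lborel. e / 2 * (cmod (w x))^2 + (cmod (u x - U x))^2 / (2 * e))"
        by (rule set_integral_norm_le[OF T1i]) (intro set_integral_add set_integrable_mult_right set_integrable_divide dU2 w2, rule dom)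
      also have "\<dots> = e / 2 * Iw + du F / (2 * e)"
        using w2 dU2 by (simp add: set_integral_add Iw_def du_def U_def)
      finally show ?thesis .
    qed
    have IU: "(LINT x:?C|lborel. (cmod (U x))^2) \<le> 2 * Iu + 2 * du F"
    proof -
      have "(LINT x:?C|lborel. (cmod (U x))^2) \<le> (LINT x:?C|lborel. 2 * (cmod (u x))^2 + 2 * (cmod (u x - U x))^2)"
        using sq_diff_le[of "u x" "u x - U x" for x]
        by (intro set_integral_mono U2 set_integral_add set_integrable_mult_right u2 dU2) auto
      also have "\<dots> = 2 * Iu + 2 * du F"
        using u2 dU2 by (simp add: set_integral_add Iu_def du_def U_def)
      finally show ?thesis .
    qed
    have b2: "norm (LINT x:?C|lborel. cnj (U x) * (w x - W x)) \<le> e / 2 * (2 * Iu + 2 * du F) + dw F / (2 * e)"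
    proof -
      have "norm (LINT x:?C|lborel. cnj (U x) * (w x - W x)) \<le>
            (LINT x:?C|lborel. e / 2 * (cmod (U x))^2 + (cmod (w x - W x))^2 / (2 * e))"
        by (rule set_integral_norm_le[OF T2i]) (intro set_integral_add set_integrable_mult_right set_integrable_divide dW2 U2, rule dom2)
      also have "\<dots> = e / 2 * (LINT x:?C|lborel. (cmod (U x))^2) + dw F / (2 * e)"
        using U2 dW2 by (simp add: set_integral_add dw_def W_def)
      also have "\<dots> \<le> e / 2 * (2 * Iu + 2 * du F) + dw F / (2 * e)"
        using IU e by simp
      finally show ?thesis .
    qed
    have "norm (complex_of_real \<bar>det B\<bar> * (\<Sum>k\<in>F. cnj (\<alpha> k) * \<beta> k) - (LINT x:?C|lborel. cnj (u x) * w x))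
        \<le> (e / 2 * Iw + du F / (2 * e)) + (e / 2 * (2 * Iu + 2 * du F) + dw F / (2 * e))"
      unfolding diff norm_minus_cancel by (rule order_trans[OF norm_triangle_ineq add_mono[OF b1 b2]])
    also have "\<dots> \<le> e * (Iw / 2 + Iu) + (e + 1/e) * (du F + dw F)"
      using e du0[of F] dw0[of F] by (simp add: field_simps)
    finally show ?thesis .
  qed
  show ?thesis
  proof (rule tendsto_from_bound[where \<delta>="\<lambda>F. du F + dw F" and M="Iw / 2 + Iu"])
    show "((\<lambda>F. du F + dw F) \<longlongrightarrow> 0) (finite_subsets_at_top (recip B))"
      using tendsto_add[OF ul wl] unfolding du_def dw_def by simp
    show "Iw / 2 + Iu \<ge> 0" using Iu0 Iw0 by simp
    fix e :: real assume e: "e > 0"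
    show "eventually (\<lambda>F. norm (complex_of_real \<bar>det B\<bar> * (\<Sum>k\<in>F. cnj (\<alpha> k) * \<beta> k) - (LINT x:?C|lborel. cnj (u x) * w x))
        \<le> e * (Iw / 2 + Iu) + (e + 1/e) * (du F + dw F)) (finite_subsets_at_top (recip B))"
      by (rule eventually_finite_subsets_at_top_weakI) (use key e in auto)
  qed
qed



lemma vec_nth_measurable[measurable]:
  fixes f :: "'a \<Rightarrow> 'b::real_normed_vector^'n::finite"
  assumes "f \<in> borel_measurable M" shows "(\<lambda>x. f x $ i) \<in> borel_measurable M"
proof -
  have "(\<lambda>v::'b^'n. v $ i) \<in> borel_measurable borel"
    by (intro borel_measurable_continuous_onI linear_continuous_on bounded_linear_vec_nth)
  then show ?thesis using measurable_compose[OF assms] by blast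
qed

lemma smult_measurable[measurable]:
  fixes f :: "'a \<Rightarrow> 'b::real_normed_field" and v :: "'b^'m::finite"
  assumes "f \<in> borel_measurable M" shows "(\<lambda>x. f x *s v) \<in> borel_measurable M"
proof -
  have e: "(\<lambda>c::'b. c *s v) = (\<lambda>c. \<chi> i. c * v $ i)" by (auto simp: vec_eq_iff)
  have "(\<lambda>c::'b. c *s v) \<in> borel_measurable borel"
    unfolding e by (intro borel_measurable_continuous_onI continuous_intros)
  then show ?thesis using measurable_compose[OF assms] by blast
qed

lemma norm_smult_vec: "norm ((c::'b::real_normed_field) *s (v::'b^'m::finite)) = norm c * norm v"
  unfolding norm_vec_def by (simp add: norm_mult L2_set_right_distrib)

lemma frequently_F: "\<not> trivial_limit (finite_subsets_at_top (A::'a set))"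
  by (simp add: finite_subsets_at_top_neq_bot)

lemma eventually_contains:
  assumes "k0 \<in> A"
  shows "eventually (\<lambda>F. finite F \<and> k0 \<in> F \<and> F \<subseteq> A) (finite_subsets_at_top A)"
  unfolding eventually_finite_subsets_at_top using assms by (intro exI[of _ "{k0}"]) auto

lemma sum_delta_aux1: "finite F \<Longrightarrow> k0 \<in> F \<Longrightarrow> (\<Sum>k\<in>F. cnj (if k = k0 then 1 else 0) * (f k::complex)) = f k0"
proof -
  assume "finite F" "k0 \<in> F"
  have "(\<Sum>k\<in>F. cnj (if k = k0 then 1 else 0) * f k) = (\<Sum>k\<in>F. if k = k0 then f k else 0)"
    by (intro sum.cong) auto
  then show ?thesis using \<open>finite F\<close> \<open>k0 \<in> F\<close> by simp
qed

lemma sum_delta_aux2: "finite F \<Longrightarrow> k0 \<in> F \<Longrightarrow> (\<Sum>k\<in>F. (f k::complex) * (if k = k0 then 1 else 0)) = f k0"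
proof -
  assume "finite F" "k0 \<in> F"
  have "(\<Sum>k\<in>F. f k * (if k = k0 then 1 else 0)) = (\<Sum>k\<in>F. if k = k0 then f k else 0)"
    by (intro sum.cong) auto
  then show ?thesis using \<open>finite F\<close> \<open>k0 \<in> F\<close> by simp
qed

lemma sapprox_ee:
  fixes B :: "real^'d::finite^'d"
  assumes Bi: "invertible B" and k0: "k0 \<in> recip B"
  shows "sapprox B (ee k0) (\<lambda>k. if k = k0 then 1 else 0)"
  unfolding sapprox_def
proof (intro conjI)
  show "ee k0 \<in> borel_measurable borel" by measurable
  show "set_integrable lborel (cell B) (\<lambda>x. (cmod (ee k0 x))^2)"
    by (rule set_integrable_bounded[OF Bi, of _ 1]) auto
  have "eventually (\<lambda>F. (LINT x:cell B|lborel. (cmod (ee k0 x - (\<Sum>k\<in>F. ee k x * (if k = k0 then 1 else 0))))^2) = 0)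
      (finite_subsets_at_top (recip B))"
    using eventually_contains[OF k0] by eventually_elim (simp add: sum_delta_aux2)
  then show "((\<lambda>F. LINT x:cell B|lborel. (cmod (ee k0 x - (\<Sum>k\<in>F. ee k x * (if k = k0 then 1 else 0))))^2) \<longlongrightarrow> 0)
      (finite_subsets_at_top (recip B))"
    by (rule tendsto_eventually)
qed

lemma coeff_formula:
  fixes B :: "real^'d::finite^'d"
  assumes Bi: "invertible B" and su: "sapprox B u \<alpha>" and k0: "k0 \<in> recip B"
  shows "(LINT x:cell B|lborel. ee (- k0) x * u x) = complex_of_real \<bar>det B\<bar> * \<alpha> k0"
proof -
  have t: "((\<lambda>F. complex_of_real \<bar>det B\<bar> * (\<Sum>k\<in>F. cnj (if k = k0 then 1 else 0) * \<alpha> k)) \<longlongrightarrow>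
      (LINT x:cell B|lborel. cnj (ee k0 x) * u x)) (finite_subsets_at_top (recip B))"
    by (rule SP[OF Bi sapprox_ee[OF Bi k0] su])
  have "eventually (\<lambda>F. complex_of_real \<bar>det B\<bar> * (\<Sum>k\<in>F. cnj (if k = k0 then 1 else 0) * \<alpha> k) =
      complex_of_real \<bar>det B\<bar> * \<alpha> k0) (finite_subsets_at_top (recip B))"
    using eventually_contains[OF k0] by eventually_elim (simp add: sum_delta_aux1)
  then have t2: "((\<lambda>F. complex_of_real \<bar>det B\<bar> * (\<Sum>k\<in>F. cnj (if k = k0 then 1 else 0) * \<alpha> k)) \<longlongrightarrow>
      complex_of_real \<bar>det B\<bar> * \<alpha> k0) (finite_subsets_at_top (recip B))"
    by (rule tendsto_eventually)
  from tendsto_unique[OF frequently_F t t2] show ?thesis by (simp add: cnj_ee)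
qed

lemma coeff_formula_cnj:
  fixes B :: "real^'d::finite^'d"
  assumes Bi: "invertible B" and su: "sapprox B u \<alpha>"
  shows "(LINT x:cell B|lborel. cnj (u x)) = complex_of_real \<bar>det B\<bar> * cnj (\<alpha> 0)"
proof -
  have t: "((\<lambda>F. complex_of_real \<bar>det B\<bar> * (\<Sum>k\<in>F. cnj (\<alpha> k) * (if k = 0 then 1 else 0))) \<longlongrightarrow>
      (LINT x:cell B|lborel. cnj (u x) * ee 0 x)) (finite_subsets_at_top (recip B))"
    by (rule SP[OF Bi su sapprox_ee[OF Bi recip_zero]])
  have "eventually (\<lambda>F. complex_of_real \<bar>det B\<bar> * (\<Sum>k\<in>F. cnj (\<alpha> k) * (if k = 0 then 1 else 0)) =
      complex_of_real \<bar>det B\<bar> * cnj (\<alpha> 0)) (finite_subsets_at_top (recip B))"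
    using eventually_contains[OF recip_zero] by eventually_elim (simp add: sum_delta_aux2)
  then have t2: "((\<lambda>F. complex_of_real \<bar>det B\<bar> * (\<Sum>k\<in>F. cnj (\<alpha> k) * (if k = 0 then 1 else 0))) \<longlongrightarrow>
      complex_of_real \<bar>det B\<bar> * cnj (\<alpha> 0)) (finite_subsets_at_top (recip B))"
    by (rule tendsto_eventually)
  from tendsto_unique[OF frequently_F t t2] show ?thesis by (simp add: ee_def)
qed

lemma vec_sapprox:
  fixes B :: "real^'d::finite^'d" and D a :: "real^'d \<Rightarrow> complex^'m::finite"
  assumes Bi: "invertible B" and H: "has_L2_fourier B D a"
  shows "sapprox B (\<lambda>x. D x $ r) (\<lambda>k. a k $ r)"
proof -
  have Dm[measurable]: "D \<in> borel_measurable borel" and D2: "set_integrable lborel (cell B) (\<lambda>x. (norm (D x))^2)"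
    and Dl: "((\<lambda>F. LINT x:cell B|lborel. (norm (D x - (\<Sum>k\<in>F. exp (\<i> * complex_of_real (k \<bullet> x)) *s a k)))^2) \<longlongrightarrow> 0)
          (finite_subsets_at_top (recip B))"
    using H unfolding has_L2_fourier_def by auto
  have comp: "(D x - (\<Sum>k\<in>F. exp (\<i> * complex_of_real (k \<bullet> x)) *s a k)) $ r = D x $ r - (\<Sum>k\<in>F. ee k x * a k $ r)" for x F
    by (simp add: ee_def sum_component)
  have r2: "set_integrable lborel (cell B) (\<lambda>x. (cmod (D x $ r))^2)"
  proof (rule set_integrable_dom[OF Bi _ D2])
    show "(\<lambda>x. (cmod (D x $ r))\<^sup>2) \<in> borel_measurable borel" by measurable
    fix x show "norm ((cmod (D x $ r))\<^sup>2) \<le> (norm (D x))\<^sup>2"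
    proof -
      have "norm (D x $ r) \<le> norm (D x)" by (rule Finite_Cartesian_Product.norm_nth_le)
      then show ?thesis by (simp add: power_mono)
    qed
  qed
  have vi: "set_integrable lborel (cell B) (\<lambda>x. (norm (D x - (\<Sum>k\<in>F. exp (\<i> * complex_of_real (k \<bullet> x)) *s a k)))^2)" for F
  proof (rule set_integrable_dom[OF Bi _ _])
    let ?A = "\<Sum>k\<in>F. norm (a k)"
    show "(\<lambda>x. (norm (D x - (\<Sum>k\<in>F. exp (\<i> * complex_of_real (k \<bullet> x)) *s a k)))^2) \<in> borel_measurable borel"
      by measurable
    show "set_integrable lborel (cell B) (\<lambda>x. 2 * (norm (D x))^2 + 2 * ?A^2)"
      using D2 const_set_integrable[OF Bi] by (intro set_integral_add) auto
    fix x
    have n1: "norm (\<Sum>k\<in>F. exp (\<i> * complex_of_real (k \<bullet> x)) *s a k) \<le> ?A"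
      by (rule order_trans[OF norm_sum]) (simp add: norm_smult_vec)
    have "norm (D x - (\<Sum>k\<in>F. exp (\<i> * complex_of_real (k \<bullet> x)) *s a k)) \<le> norm (D x) + ?A"
      using n1 norm_triangle_ineq4[of "D x"] by (meson add_left_mono order_trans)
    then have "(norm (D x - (\<Sum>k\<in>F. exp (\<i> * complex_of_real (k \<bullet> x)) *s a k)))^2 \<le> (norm (D x) + ?A)^2"
      by (intro power_mono) auto
    also have "\<dots> \<le> 2 * (norm (D x))^2 + 2 * ?A^2"
      using sum_squares_ge_zero[of "norm (D x) - ?A" 0] by (simp add: power2_eq_square algebra_simps)
    finally show "norm ((norm (D x - (\<Sum>k\<in>F. exp (\<i> * complex_of_real (k \<bullet> x)) *s a k)))^2) \<le> 2 * (norm (D x))^2 + 2 * ?A^2"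
      by simp
  qed
  show ?thesis unfolding sapprox_def
  proof (intro conjI)
    show "(\<lambda>x. D x $ r) \<in> borel_measurable borel" by measurable
    show "set_integrable lborel (cell B) (\<lambda>x. (cmod (D x $ r))^2)" by (rule r2)
    show "((\<lambda>F. LINT x:cell B|lborel. (cmod (D x $ r - (\<Sum>k\<in>F. ee k x * a k $ r)))^2) \<longlongrightarrow> 0) (finite_subsets_at_top (recip B))"
    proof (rule tendsto_sandwich[OF _ _ tendsto_const Dl])
      show "eventually (\<lambda>F. 0 \<le> (LINT x:cell B|lborel. (cmod (D x $ r - (\<Sum>k\<in>F. ee k x * a k $ r)))^2)) (finite_subsets_at_top (recip B))"
        by (intro always_eventually allI set_integral_nonneg') simp
      show "eventually (\<lambda>F. (LINT x:cell B|lborel. (cmod (D x $ r - (\<Sum>k\<in>F. ee k x * a k $ r)))^2) \<le>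
          (LINT x:cell B|lborel. (norm (D x - (\<Sum>k\<in>F. exp (\<i> * complex_of_real (k \<bullet> x)) *s a k)))^2)) (finite_subsets_at_top (recip B))"
      proof (intro always_eventually allI set_integral_mono)
        fix F
        show "set_integrable lborel (cell B) (\<lambda>x. (cmod (D x $ r - (\<Sum>k\<in>F. ee k x * a k $ r)))^2)"
          by (rule approx_integrable[OF Bi _ r2]) measurable
        show "set_integrable lborel (cell B) (\<lambda>x. (norm (D x - (\<Sum>k\<in>F. exp (\<i> * complex_of_real (k \<bullet> x)) *s a k)))^2)"
          by (rule vi)
        fix x
        show "(cmod (D x $ r - (\<Sum>k\<in>F. ee k x * a k $ r)))^2 \<le> (norm (D x - (\<Sum>k\<in>F. exp (\<i> * complex_of_real (k \<bullet> x)) *s a k)))^2"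
          unfolding comp[symmetric] by (intro power_mono Finite_Cartesian_Product.norm_nth_le) simp
      qed
    qed
  qed
qed



lemma norm_le_sum_comp: "norm (x::'b::real_normed_vector^'n::finite) \<le> (\<Sum>i\<in>UNIV. norm (x $ i))"
  unfolding norm_vec_def by (rule L2_set_le_sum) simp

lemma norm_mv_le: "norm ((S::complex^'m::finite^'m) *v v) \<le> (\<Sum>r\<in>UNIV. \<Sum>j\<in>UNIV. cmod (S $ r $ j)) * norm v"
proof -
  have "norm (S *v v) \<le> (\<Sum>r\<in>UNIV. cmod ((S *v v) $ r))" by (rule norm_le_sum_comp)
  also have "\<dots> \<le> (\<Sum>r\<in>UNIV. \<Sum>j\<in>UNIV. cmod (S $ r $ j) * norm v)"
  proof (rule sum_mono)
    fix r
    have "cmod ((S *v v) $ r) = cmod (\<Sum>j\<in>UNIV. S $ r $ j * v $ j)" by (simp add: matrix_vector_mult_def)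
    also have "\<dots> \<le> (\<Sum>j\<in>UNIV. cmod (S $ r $ j * v $ j))" by (rule norm_sum)
    also have "\<dots> \<le> (\<Sum>j\<in>UNIV. cmod (S $ r $ j) * norm v)"
      by (intro sum_mono) (simp add: norm_mult mult_left_mono Finite_Cartesian_Product.norm_nth_le)
    finally show "cmod ((S *v v) $ r) \<le> (\<Sum>j\<in>UNIV. cmod (S $ r $ j) * norm v)" .
  qed
  also have "\<dots> = (\<Sum>r\<in>UNIV. \<Sum>j\<in>UNIV. cmod (S $ r $ j)) * norm v"
    by (simp add: sum_distrib_right)
  finally show ?thesis .
qed

lemma vec_measurable_components:
  fixes f :: "'a \<Rightarrow> complex^'n::finite"
  assumes "\<And>i. (\<lambda>x. f x $ i) \<in> borel_measurable M"
  shows "f \<in> borel_measurable M"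
proof -
  have "f x = (\<Sum>i\<in>UNIV. (f x $ i) *s axis i 1)" for x
  proof -
    have "(\<Sum>i\<in>UNIV. (f x $ i) *s axis i 1) $ j = f x $ j" for j
    proof -
      have "(\<Sum>i\<in>UNIV. (f x $ i) *s axis i 1) $ j = (\<Sum>i\<in>UNIV. f x $ i * (if j = i then 1 else 0))"
        by (simp add: axis_def)
      also have "\<dots> = (\<Sum>i\<in>UNIV. if i = j then f x $ i else 0)"
        by (intro sum.cong) auto
      also have "\<dots> = f x $ j" by simp
      finally show ?thesis .
    qed
    then show ?thesis by (simp add: vec_eq_iff)
  qed
  then have "f = (\<lambda>x. \<Sum>i\<in>UNIV. (f x $ i) *s axis i 1)" by auto
  also have "\<dots> \<in> borel_measurable M"
    using assms by (intro borel_measurable_sum smult_measurable)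
  finally show ?thesis .
qed

lemma set_integral_component:
  fixes f :: "'a \<Rightarrow> complex^'n::finite"
  assumes "set_integrable M A f"
  shows "(LINT x:A|M. f x) $ i = (LINT x:A|M. f x $ i)"
  using integral_bounded_linear[OF bounded_linear_vec_nth[of i] assms[unfolded set_integrable_def]]
  unfolding set_lebesgue_integral_def by simp

lemma cdot_expand: "cdot v ((S::complex^'m::finite^'m) *v w) = (\<Sum>r\<in>UNIV. \<Sum>j\<in>UNIV. S $ r $ j * (cnj (v $ r) * w $ j))"
  by (simp add: cdot_def matrix_vector_mult_def sum_distrib_left mult_ac)

lemma herm_real:
  assumes "hermitian (S::complex^'m::finite^'m)"
  shows "complex_of_real (quadform S v) = cdot v (S *v v)"
proof -
  have "cnj (cdot v (S *v v)) = (\<Sum>r\<in>UNIV. \<Sum>j\<in>UNIV. cnj (S $ r $ j) * (v $ r * cnj (v $ j)))"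
    by (simp add: cdot_expand cnj_sum)
  also have "\<dots> = (\<Sum>r\<in>UNIV. \<Sum>j\<in>UNIV. S $ j $ r * (v $ r * cnj (v $ j)))"
  proof -
    have h: "cnj (S $ i $ j) = S $ j $ i" for i j
      using assms unfolding hermitian_def by (metis complex_cnj_cnj)
    show ?thesis by (simp add: h)
  qed
  also have "\<dots> = (\<Sum>j\<in>UNIV. \<Sum>r\<in>UNIV. S $ j $ r * (v $ r * cnj (v $ j)))"
    by (rule sum.swap)
  also have "\<dots> = (\<Sum>j\<in>UNIV. \<Sum>r\<in>UNIV. S $ j $ r * (cnj (v $ j) * v $ r))"
    by (simp add: mult.commute)
  also have "\<dots> = cdot v (S *v v)" by (simp add: cdot_expand)
  finally have "cnj (cdot v (S *v v)) = cdot v (S *v v)" .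
  then have "Im (cnj (cdot v (S *v v))) = Im (cdot v (S *v v))" by simp
  then have "Im (cdot v (S *v v)) = 0" by simp
  then show ?thesis unfolding quadform_def by (simp add: complex_eq_iff)
qed

lemma int_dom_sq:
  fixes B :: "real^'d::finite^'d"
  assumes Bi: "invertible B" and gm: "g \<in> borel_measurable borel" and hm: "h \<in> borel_measurable borel"
    and g2: "set_integrable lborel (cell B) (\<lambda>x. (cmod (g x))^2)" and h2: "set_integrable lborel (cell B) (\<lambda>x. (cmod (h x))^2)"
  shows "set_integrable lborel (cell B) (\<lambda>x. cnj (g x) * h x)"
proof (rule set_integrable_dom[OF Bi])
  show "(\<lambda>x. cnj (g x) * h x) \<in> borel_measurable borel" using gm hm by measurable
  show "set_integrable lborel (cell B) (\<lambda>x. (cmod (h x))^2 / 2 + (cmod (g x))^2 / 2)"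
    using g2 h2 by (intro set_integral_add set_integrable_divide) auto
  fix x show "norm (cnj (g x) * h x) \<le> (cmod (h x))^2 / 2 + (cmod (g x))^2 / 2"
    using amgm[of 1 "g x" "h x"] by (simp add: norm_mult)
qed

lemma partii:
  fixes B :: "real^'d::finite^'d" and E :: "real^'d \<Rightarrow> complex^'m::finite" and S :: "complex^'m^'m"
  assumes Bi: "invertible B" and herm: "hermitian S"
    and H: "has_L2_fourier B (\<lambda>x. E x - E0) a"
    and a0: "a 0 = 0" and aq: "\<And>k. k \<in> recip B \<Longrightarrow> quadform S (a k) = 0"
  shows "avg B (\<lambda>x. quadform S (E x)) = quadform S (avg B E)"
    and "\<And>k. k \<in> recip B - {0} \<Longrightarrow> fourier_coeff B (\<lambda>x. S *v E x) k = S *v a k"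
proof -
  define D where "D x = E x - E0" for x
  define V where "V = \<bar>det B\<bar>"
  let ?C = "cell B"
  have V0: "V > 0" unfolding V_def using det_pos[OF Bi] .
  have HD: "has_L2_fourier B D a" using H unfolding D_def .
  have Dm[measurable]: "D \<in> borel_measurable borel" and D2: "set_integrable lborel ?C (\<lambda>x. (norm (D x))^2)"
    using HD unfolding has_L2_fourier_def by auto
  have Em[measurable]: "E \<in> borel_measurable borel"
  proof -
    have "E = (\<lambda>x. D x + E0)" by (auto simp: D_def)
    then show ?thesis by simp
  qed
  have ED: "E x = E0 + D x" for x by (simp add: D_def)
  have sD: "sapprox B (\<lambda>x. D x $ r) (\<lambda>k. a k $ r)" for r by (rule vec_sapprox[OF Bi HD])
  have Drm[measurable]: "(\<lambda>x. D x $ r) \<in> borel_measurable borel" for r by measurable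
  have Dr2: "set_integrable lborel ?C (\<lambda>x. (cmod (D x $ r))^2)" for r using sD[of r] unfolding sapprox_def by auto
  have one: "set_integrable lborel ?C (\<lambda>x. (1::complex))" by (rule set_integrable_bounded[OF Bi, of _ 1]) auto
  have meas: "(LINT x:?C|lborel. (1::complex)) = complex_of_real V"
    using orth[OF Bi recip_zero] by (simp add: V_def)
  have Dri: "set_integrable lborel ?C (\<lambda>x. D x $ r)" for r
    using int_dom_sq[OF Bi _ Drm Dr2[of r] Dr2[of r]] 
  proof -
    have "set_integrable lborel ?C (\<lambda>x. cnj (1::complex) * D x $ r)"
      by (rule int_dom_sq[OF Bi _ Drm _ Dr2]) (auto intro: set_integrable_bounded[OF Bi, of _ 1])
    then show ?thesis by simp
  qed
  have cDri: "set_integrable lborel ?C (\<lambda>x. cnj (D x $ r))" for r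
  proof -
    have "set_integrable lborel ?C (\<lambda>x. cnj (D x $ r) * 1)"
      by (rule int_dom_sq[OF Bi Drm _ Dr2]) (auto intro: set_integrable_bounded[OF Bi, of _ 1])
    then show ?thesis by simp
  qed
  have S1: "(LINT x:?C|lborel. D x $ r) = 0" for r
    using coeff_formula[OF Bi sD[of r] recip_zero] by (simp add: ee_def a0)
  have S2: "(LINT x:?C|lborel. cnj (D x $ r)) = 0" for r
    using coeff_formula_cnj[OF Bi sD[of r]] by (simp add: a0)
  have S3: "(LINT x:?C|lborel. ee (- k) x * D x $ r) = complex_of_real V * a k $ r" if "k \<in> recip B" for k r
    using coeff_formula[OF Bi sD[of r] that] by (simp add: V_def)
  have S4: "((\<lambda>F. complex_of_real V * (\<Sum>k\<in>F. cnj (a k $ r) * a k $ j)) \<longlongrightarrow> (LINT x:?C|lborel. cnj (D x $ r) * D x $ j))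
      (finite_subsets_at_top (recip B))" for r j
    using SP[OF Bi sD[of r] sD[of j]] by (simp add: V_def)
  have E2: "set_integrable lborel ?C (\<lambda>x. (norm (E x))^2)"
  proof (rule set_integrable_dom[OF Bi _ _])
    show "(\<lambda>x. (norm (E x))^2) \<in> borel_measurable borel" by measurable
    show "set_integrable lborel ?C (\<lambda>x. 2 * (norm E0)^2 + 2 * (norm (D x))^2)"
      using D2 const_set_integrable[OF Bi] by (intro set_integral_add) auto
    fix x
    have "norm (E x) \<le> norm E0 + norm (D x)" unfolding ED by (rule norm_triangle_ineq)
    then have "(norm (E x))^2 \<le> (norm E0 + norm (D x))^2" by (intro power_mono) auto
    also have "\<dots> \<le> 2 * (norm E0)^2 + 2 * (norm (D x))^2"
      using sum_squares_ge_zero[of "norm E0 - norm (D x)" 0] by (simp add: power2_eq_square algebra_simps)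
    finally show "norm ((norm (E x))^2) \<le> 2 * (norm E0)^2 + 2 * (norm (D x))^2" by simp
  qed
  have Eint_norm: "set_integrable lborel ?C (\<lambda>x. 1 + (norm (E x))^2)"
    using E2 const_set_integrable[OF Bi] by (intro set_integral_add) auto
  have nle: "t \<le> 1 + t^2" for t :: real
    using sum_squares_ge_zero[of "t - 1/2" 0] by (simp add: power2_eq_square algebra_simps)
  have Ei: "set_integrable lborel ?C E"
    by (rule set_integrable_dom[OF Bi Em Eint_norm]) (rule nle)
  have Erm[measurable]: "(\<lambda>x. E x $ r) \<in> borel_measurable borel" for r by measurable
  have Er2: "set_integrable lborel ?C (\<lambda>x. (cmod (E x $ r))^2)" for r
  proof (rule set_integrable_dom[OF Bi _ E2])
    show "(\<lambda>x. (cmod (E x $ r))^2) \<in> borel_measurable borel" by measurable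
    fix x
    have "norm (E x $ r) \<le> norm (E x)" by (rule Finite_Cartesian_Product.norm_nth_le)
    then show "norm ((cmod (E x $ r))^2) \<le> (norm (E x))^2" by (simp add: power_mono)
  qed
    have avgE: "avg B E = E0"
  proof -
    have "(avg B E) $ r = E0 $ r" for r
    proof -
      have "(avg B E) $ r = (1 / V) *\<^sub>R (LINT x:?C|lborel. E x $ r)"
        unfolding avg_def V_def by (simp add: set_integral_component[OF Ei])
      also have "(LINT x:?C|lborel. E x $ r) = (LINT x:?C|lborel. E0 $ r * 1 + D x $ r)"
        by (simp add: ED)
      also have "\<dots> = (LINT x:?C|lborel. E0 $ r * 1) + (LINT x:?C|lborel. D x $ r)"
        by (rule set_integral_add(2)[OF set_integrable_mult_right[OF one] Dri])
      also have "\<dots> = E0 $ r * complex_of_real V"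
        by (simp only: set_integral_mult_right meas S1) simp
      finally show ?thesis using V0 by (simp add: scaleR_conv_of_real)
    qed
    then show ?thesis by (simp add: vec_eq_iff)
  qed
    have Iq: "(\<Sum>r\<in>UNIV. \<Sum>j\<in>UNIV. S $ r $ j * (LINT x:?C|lborel. cnj (D x $ r) * D x $ j)) = 0"
  proof -
    have t: "((\<lambda>F. \<Sum>r\<in>UNIV. \<Sum>j\<in>UNIV. S $ r $ j * (complex_of_real V * (\<Sum>k\<in>F. cnj (a k $ r) * a k $ j))) \<longlongrightarrow>
        (\<Sum>r\<in>UNIV. \<Sum>j\<in>UNIV. S $ r $ j * (LINT x:?C|lborel. cnj (D x $ r) * D x $ j))) (finite_subsets_at_top (recip B))"
      by (intro tendsto_sum tendsto_mult_left S4)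
    have z: "eventually (\<lambda>F. (\<Sum>r\<in>UNIV. \<Sum>j\<in>UNIV. S $ r $ j * (complex_of_real V * (\<Sum>k\<in>F. cnj (a k $ r) * a k $ j))) = 0)
        (finite_subsets_at_top (recip B))"
    proof (rule eventually_finite_subsets_at_top_weakI)
      fix F assume F: "finite F" "F \<subseteq> recip B"
      have "(\<Sum>r\<in>UNIV. \<Sum>j\<in>UNIV. S $ r $ j * (complex_of_real V * (\<Sum>k\<in>F. cnj (a k $ r) * a k $ j)))
          = complex_of_real V * (\<Sum>k\<in>F. \<Sum>r\<in>UNIV. \<Sum>j\<in>UNIV. S $ r $ j * (cnj (a k $ r) * a k $ j))"
      proof -
        have "(\<Sum>r\<in>UNIV. \<Sum>j\<in>UNIV. S $ r $ j * (complex_of_real V * (\<Sum>k\<in>F. cnj (a k $ r) * a k $ j)))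
          = (\<Sum>r\<in>UNIV. \<Sum>j\<in>UNIV. \<Sum>k\<in>F. complex_of_real V * (S $ r $ j * (cnj (a k $ r) * a k $ j)))"
          by (simp add: sum_distrib_left mult_ac)
        also have "\<dots> = (\<Sum>r\<in>UNIV. \<Sum>k\<in>F. \<Sum>j\<in>UNIV. complex_of_real V * (S $ r $ j * (cnj (a k $ r) * a k $ j)))"
          by (rule sum.cong[OF refl], rule sum.swap)
        also have "\<dots> = (\<Sum>k\<in>F. \<Sum>r\<in>UNIV. \<Sum>j\<in>UNIV. complex_of_real V * (S $ r $ j * (cnj (a k $ r) * a k $ j)))"
          by (rule sum.swap)
        also have "\<dots> = complex_of_real V * (\<Sum>k\<in>F. \<Sum>r\<in>UNIV. \<Sum>j\<in>UNIV. S $ r $ j * (cnj (a k $ r) * a k $ j))"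
          by (simp add: sum_distrib_left)
        finally show ?thesis .
      qed
      also have "\<dots> = complex_of_real V * (\<Sum>k\<in>F. complex_of_real (quadform S (a k)))"
        by (simp add: herm_real[OF herm] cdot_expand)
      also have "\<dots> = 0" using F aq by (simp add: subsetD)
      finally show "(\<Sum>r\<in>UNIV. \<Sum>j\<in>UNIV. S $ r $ j * (complex_of_real V * (\<Sum>k\<in>F. cnj (a k $ r) * a k $ j))) = 0" .
    qed
    show ?thesis using tendsto_unique[OF frequently_F t tendsto_eventually[OF z]] .
  qed
  have crE: "(LINT x:?C|lborel. cnj (E x $ r) * E x $ j) = complex_of_real V * (cnj (E0 $ r) * E0 $ j) + (LINT x:?C|lborel. cnj (D x $ r) * D x $ j)" for r j
  proof -
    have DD: "set_integrable lborel ?C (\<lambda>x. cnj (D x $ r) * D x $ j)" by (rule int_dom_sq[OF Bi Drm Drm Dr2 Dr2])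
    have e: "cnj (E x $ r) * E x $ j = (cnj (E0 $ r) * E0 $ j) * 1 + (cnj (E0 $ r) * D x $ j + (cnj (D x $ r) * E0 $ j + cnj (D x $ r) * D x $ j))" for x
      by (simp add: ED algebra_simps)
    have i1: "set_integrable lborel ?C (\<lambda>x. (cnj (E0 $ r) * E0 $ j) * 1)"
      by (rule set_integrable_mult_right[OF one])
    have i2: "set_integrable lborel ?C (\<lambda>x. cnj (E0 $ r) * D x $ j)"
      by (rule set_integrable_mult_right[OF Dri])
    have i3: "set_integrable lborel ?C (\<lambda>x. cnj (D x $ r) * E0 $ j)"
      by (rule set_integrable_mult_left[OF cDri])
    have "(LINT x:?C|lborel. cnj (E x $ r) * E x $ j) =
        (LINT x:?C|lborel. (cnj (E0 $ r) * E0 $ j) * 1) + ((LINT x:?C|lborel. cnj (E0 $ r) * D x $ j) +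
        ((LINT x:?C|lborel. cnj (D x $ r) * E0 $ j) + (LINT x:?C|lborel. cnj (D x $ r) * D x $ j)))"
      unfolding e
      by (simp only: set_integral_add(2)[OF i1 set_integral_add(1)[OF i2 set_integral_add(1)[OF i3 DD]]]
          set_integral_add(2)[OF i2 set_integral_add(1)[OF i3 DD]] set_integral_add(2)[OF i3 DD])
    also have "\<dots> = (cnj (E0 $ r) * E0 $ j) * complex_of_real V + (cnj (E0 $ r) * 0 + (0 * E0 $ j + (LINT x:?C|lborel. cnj (D x $ r) * D x $ j)))"
      by (simp only: set_integral_mult_right set_integral_mult_left meas S1 S2)
    finally have "(LINT x:?C|lborel. cnj (E x $ r) * E x $ j) = (cnj (E0 $ r) * E0 $ j) * complex_of_real V + (cnj (E0 $ r) * 0 + (0 * E0 $ j + (LINT x:?C|lborel. cnj (D x $ r) * D x $ j)))" .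
    then show ?thesis by (simp add: mult_ac)
  qed
  have qint: "(LINT x:?C|lborel. quadform S (E x)) = V * quadform S E0"
  proof -
    have ii: "set_integrable lborel ?C (\<lambda>x. S $ r $ j * (cnj (E x $ r) * E x $ j))" for r j
      using int_dom_sq[OF Bi Erm Erm Er2 Er2] by simp
    have "complex_of_real (LINT x:?C|lborel. quadform S (E x)) = (LINT x:?C|lborel. complex_of_real (quadform S (E x)))"
      by (simp add: set_integral_complex_of_real)
    also have "\<dots> = (LINT x:?C|lborel. (\<Sum>r\<in>UNIV. \<Sum>j\<in>UNIV. S $ r $ j * (cnj (E x $ r) * E x $ j)))"
      by (simp add: herm_real[OF herm] cdot_expand)
    also have "\<dots> = (\<Sum>r\<in>UNIV. \<Sum>j\<in>UNIV. S $ r $ j * (LINT x:?C|lborel. cnj (E x $ r) * E x $ j))"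
      by (simp add: set_integral_sum set_integrable_sum ii)
    also have "\<dots> = (\<Sum>r\<in>UNIV. \<Sum>j\<in>UNIV. S $ r $ j * (complex_of_real V * (cnj (E0 $ r) * E0 $ j))) +
        (\<Sum>r\<in>UNIV. \<Sum>j\<in>UNIV. S $ r $ j * (LINT x:?C|lborel. cnj (D x $ r) * D x $ j))"
      by (simp add: crE distrib_left sum.distrib)
    also have "\<dots> = complex_of_real V * cdot E0 (S *v E0)"
      unfolding Iq by (simp add: cdot_expand sum_distrib_left mult_ac)
    also have "\<dots> = complex_of_real (V * quadform S E0)"
      by (simp add: herm_real[OF herm])
    finally show ?thesis by (simp only: of_real_eq_iff)
  qed
  have "avg B (\<lambda>x. quadform S (E x)) = quadform S E0"
    unfolding avg_def qint V_def[symmetric] using V0 by simp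
  then show "avg B (\<lambda>x. quadform S (E x)) = quadform S (avg B E)" using avgE by simp
    fix k assume k: "k \<in> recip B - {0}"
  have kr: "k \<in> recip B" "k \<noteq> 0" using k by auto
  have mk: "- k \<in> recip B" using recip_diff[OF recip_zero kr(1)] by simp
  have eek: "(LINT x:?C|lborel. ee (- k) x) = 0"
    using orth[OF Bi mk] kr(2) by (simp add: ee_def)
  have eei: "set_integrable lborel ?C (ee (- k))" by (rule set_integrable_bounded[OF Bi, of _ 1]) auto
  have eeD: "set_integrable lborel ?C (\<lambda>x. ee (- k) x * D x $ j)" for j
  proof -
    have "set_integrable lborel ?C (\<lambda>x. cnj (ee k x) * D x $ j)"
      by (rule int_dom_sq[OF Bi _ Drm _ Dr2]) (auto intro: set_integrable_bounded[OF Bi, of _ 1])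
    then show ?thesis by (simp add: cnj_ee)
  qed
  let ?K = "\<Sum>r\<in>UNIV. \<Sum>j\<in>UNIV. cmod (S $ r $ j)"
  have vi: "set_integrable lborel ?C (\<lambda>x. exp (- (\<i> * complex_of_real (k \<bullet> x))) *s (S *v E x))"
  proof (rule set_integrable_dom[OF Bi _ _])
    show "(\<lambda>x. exp (- (\<i> * complex_of_real (k \<bullet> x))) *s (S *v E x)) \<in> borel_measurable borel"
    proof -
      have "(\<lambda>x. S *v E x) \<in> borel_measurable borel"
      proof -
        have "(\<lambda>v. S *v v) \<in> borel_measurable borel"
        proof -
          have e: "(\<lambda>v. S *v v) = (\<lambda>v. \<chi> r. \<Sum>j\<in>UNIV. S $ r $ j * v $ j)" by (auto simp: matrix_vector_mult_def)
          show ?thesis unfolding e by (intro borel_measurable_continuous_onI continuous_intros)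
        qed
        then show ?thesis using measurable_compose[OF Em] by blast
      qed
      then show ?thesis
      proof -
        assume [measurable]: "(\<lambda>x. S *v E x) \<in> borel_measurable borel"
        have e2: "(\<lambda>x. exp (- (\<i> * complex_of_real (k \<bullet> x))) *s (S *v E x)) = (\<lambda>x. \<chi> r. exp (- (\<i> * complex_of_real (k \<bullet> x))) * (S *v E x) $ r)"
          by (auto simp: vec_eq_iff)
        show ?thesis unfolding e2 by (rule vec_measurable_components) simp
      qed
    qed
    show "set_integrable lborel ?C (\<lambda>x. ?K * (1 + (norm (E x))^2))"
      using Eint_norm by simp
    fix x
    have "norm (exp (- (\<i> * complex_of_real (k \<bullet> x))) *s (S *v E x)) = norm (S *v E x)"
      by (simp add: norm_smult_vec)
    also have "\<dots> \<le> ?K * norm (E x)" by (rule norm_mv_le)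
    also have "\<dots> \<le> ?K * (1 + (norm (E x))^2)" by (intro mult_left_mono nle sum_nonneg) auto
    finally show "norm (exp (- (\<i> * complex_of_real (k \<bullet> x))) *s (S *v E x)) \<le> ?K * (1 + (norm (E x))^2)" .
  qed
  have "(fourier_coeff B (\<lambda>x. S *v E x) k) $ r = (S *v a k) $ r" for r
  proof -
    have "(fourier_coeff B (\<lambda>x. S *v E x) k) $ r =
        (1 / V) *\<^sub>R (LINT x:?C|lborel. (exp (- (\<i> * complex_of_real (k \<bullet> x))) *s (S *v E x)) $ r)"
      unfolding fourier_coeff_def avg_def V_def by (simp add: set_integral_component[OF vi])
    also have "(\<lambda>x. (exp (- (\<i> * complex_of_real (k \<bullet> x))) *s (S *v E x)) $ r) =
        (\<lambda>x. \<Sum>j\<in>UNIV. S $ r $ j * (E0 $ j * ee (- k) x + ee (- k) x * D x $ j))"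
      by (auto simp: ee_def matrix_vector_mult_def ED sum_distrib_left algebra_simps intro!: sum.cong)
    also have "(LINT x:?C|lborel. \<Sum>j\<in>UNIV. S $ r $ j * (E0 $ j * ee (- k) x + ee (- k) x * D x $ j)) =
        (\<Sum>j\<in>UNIV. S $ r $ j * (E0 $ j * 0 + complex_of_real V * a k $ j))"
    proof -
      have ii: "set_integrable lborel ?C (\<lambda>x. S $ r $ j * (E0 $ j * ee (- k) x + ee (- k) x * D x $ j))" for j
        using eei eeD[of j] by (intro set_integrable_mult_right set_integral_add) auto
      show ?thesis
        by (subst set_integral_sum[OF ii]) (use eei eeD S3[OF kr(1)] eek in \<open>simp add: set_integral_add\<close>)
    qed
    also have "(1 / V) *\<^sub>R (\<Sum>j\<in>UNIV. S $ r $ j * (E0 $ j * 0 + complex_of_real V * a k $ j)) = (S *v a k) $ r"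
      using V0 by (simp add: scaleR_conv_of_real matrix_vector_mult_def sum_distrib_left mult_ac)
    finally show ?thesis .
  qed
  then show "fourier_coeff B (\<lambda>x. S *v E x) k = S *v a k" by (simp add: vec_eq_iff)
qed



lemma dpart_zero: "dpart as (\<lambda>y. 0) = (\<lambda>y. 0)"
  by (induction as) (auto simp: partial_deriv_def fun_eq_iff)

lemma Lop_zero: "Lop A0 Ah t (\<lambda>x. 0) x = 0"
proof -
  have "(\<lambda>y. (0::complex^'l) $ q) = (\<lambda>y. 0)" for q by simp
  then show ?thesis by (simp add: Lop_def dpart_zero vec_eq_iff)
qed

lemma poly_zero: "poly_deg_le t (\<lambda>x. 0)"
  unfolding poly_deg_le_def by (intro exI[of _ "\<lambda>_. 0"]) simp

definition diagm :: "(real^'d::finite) \<Rightarrow> real^'d^'d" where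
  "diagm b = (\<chi> i j. if i = j then b $ i else 0)"

lemma diagm_mult:
  fixes b c :: "real^'d::finite"
  shows "diagm b ** diagm c = diagm (\<chi> i. b $ i * c $ i)"
proof -
  have "(\<Sum>l\<in>UNIV. (if i = l then b $ i else 0) * (if l = j then c $ l else 0)) = (if i = j then b $ i * c $ i else 0)" for i j :: 'd
  proof -
    have "(\<Sum>l\<in>UNIV. (if i = l then b $ i else 0) * (if l = j then c $ l else 0)) = (\<Sum>l\<in>UNIV. if l = i then (b $ i * (if i = j then c $ i else 0)) else 0)"
      by (intro sum.cong) auto
    also have "\<dots> = (if i = j then b $ i * c $ i else 0)" by simp
    finally show ?thesis .
  qed
  then show ?thesis by (simp add: diagm_def matrix_matrix_mult_def vec_eq_iff)
qed

lemma diagm_one: "diagm (\<chi> i. 1) = mat 1"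
  by (simp add: diagm_def mat_def vec_eq_iff)

lemma invertible_diagm:
  assumes "\<And>i. b $ i \<noteq> 0" shows "invertible (diagm b)"
  unfolding invertible_def
proof (intro exI conjI)
  show "diagm b ** diagm (\<chi> i. 1 / b $ i) = mat 1" using assms by (simp add: diagm_mult diagm_one[symmetric])
  show "diagm (\<chi> i. 1 / b $ i) ** diagm b = mat 1" using assms by (simp add: diagm_mult diagm_one[symmetric])
qed

lemma diagm_mv:
  fixes b n :: "real^'d::finite"
  shows "diagm b *v n = (\<chi> i. b $ i * n $ i)"
proof -
  have "(\<Sum>j\<in>UNIV. (if i = j then b $ i else 0) * n $ j) = b $ i * n $ i" for i :: 'd
  proof -
    have "(\<Sum>j\<in>UNIV. (if i = j then b $ i else 0) * n $ j) = (\<Sum>j\<in>UNIV. if j = i then b $ i * n $ i else 0)"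
      by (intro sum.cong) auto
    then show ?thesis by simp
  qed
  then show ?thesis by (simp add: diagm_def matrix_vector_mult_def vec_eq_iff)
qed

definition bvec :: "real^'d::finite \<Rightarrow> real^'d" where
  "bvec k = (\<chi> i. if k $ i = 0 then 1 else 2 * pi / \<bar>k $ i\<bar>)"

lemma bvec_nz: "bvec k $ i \<noteq> 0" by (simp add: bvec_def)

lemma k_recip_diag:
  fixes k :: "real^'d::finite"
  shows "k \<in> recip (diagm (bvec k))"
  unfolding recip_def
proof (intro CollectI ballI allI)
  fix lam x assume "lam \<in> lattice (diagm (bvec k))"
  then obtain n :: "int^'d" where lam: "lam = diagm (bvec k) *v (\<chi> i. real_of_int (n $ i))"
    unfolding lattice_def by auto
  define m where "m = (\<Sum>i\<in>UNIV. (if k $ i = 0 then 0 else sgn (k $ i)) * real_of_int (n $ i))"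
  have mZ: "m \<in> \<int>" unfolding m_def by (intro Ints_sum) (auto simp: sgn_real_def)
  have "k \<bullet> lam = (\<Sum>i\<in>UNIV. k $ i * (bvec k $ i * real_of_int (n $ i)))"
    by (simp add: lam diagm_mv inner_vec_def)
  also have "\<dots> = 2 * pi * m"
    unfolding m_def sum_distrib_left
    by (intro sum.cong refl) (auto simp: bvec_def sgn_real_def field_simps)
  finally have kl: "k \<bullet> lam = 2 * pi * m" .
  have "exp (\<i> * complex_of_real (k \<bullet> (x + lam))) = exp (\<i> * complex_of_real (k \<bullet> x)) * exp ((2 * complex_of_real m * pi) * \<i>)"
    by (simp add: inner_add_right kl exp_add[symmetric] algebra_simps)
  also have "exp ((2 * complex_of_real m * pi) * \<i>) = 1"
  proof -
    obtain j :: int where mj: "m = of_int j" using mZ Ints_cases by blast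
    show ?thesis unfolding exp_eq_1 by (auto simp: mj intro!: exI[of _ j])
  qed
  finally show "exp (\<i> * complex_of_real (k \<bullet> (x + lam))) = exp (\<i> * complex_of_real (k \<bullet> x))" by simp
qed



definition sq :: "complex^'m::finite^'m \<Rightarrow> complex^'m \<Rightarrow> complex^'m \<Rightarrow> complex" where
  "sq S u v = cdot u (S *v v)"

lemma sq_add_left: "sq S (u + v) w = sq S u w + sq S v w"
  by (simp add: sq_def cdot_def sum.distrib distrib_right)

lemma sq_add_right: "sq S u (v + w) = sq S u v + sq S u w"
  by (simp add: sq_def cdot_def matrix_vector_right_distrib sum.distrib distrib_left)

lemma mv_smult: "(A::'a::comm_ring_1^'n::finite^'k::finite) *v (z *s v) = z *s (A *v v)"
  by (simp add: matrix_vector_mult_def vec_eq_iff sum_distrib_left mult_ac)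

lemma sq_smult_left: "sq S (z *s u) w = cnj z * sq S u w"
  by (simp add: sq_def cdot_def sum_distrib_left mult_ac)

lemma sq_smult_right: "sq S u (z *s w) = z * sq S u w"
  by (simp add: sq_def cdot_def mv_smult sum_distrib_left mult_ac)

lemma sq_herm:
  assumes "hermitian S" shows "sq S u v = cnj (sq S v u)"
proof -
  have h: "cnj (S $ i $ j) = S $ j $ i" for i j
    using assms unfolding hermitian_def by (metis complex_cnj_cnj)
  have "cnj (sq S v u) = (\<Sum>r\<in>UNIV. \<Sum>j\<in>UNIV. cnj (S $ r $ j) * (v $ r * cnj (u $ j)))"
    by (simp add: sq_def cdot_expand cnj_sum)
  also have "\<dots> = (\<Sum>r\<in>UNIV. \<Sum>j\<in>UNIV. S $ j $ r * (v $ r * cnj (u $ j)))" by (simp add: h)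
  also have "\<dots> = (\<Sum>j\<in>UNIV. \<Sum>r\<in>UNIV. S $ j $ r * (v $ r * cnj (u $ j)))" by (rule sum.swap)
  also have "\<dots> = sq S u v" by (simp add: sq_def cdot_expand mult_ac)
  finally show ?thesis by simp
qed

lemma quad_expand:
  assumes herm: "hermitian S"
  shows "complex_of_real (quadform S (H + z *s W)) =
     complex_of_real (quadform S H) + z * cnj (sq S W H) + cnj z * sq S W H + cnj z * z * complex_of_real (quadform S W)"
proof -
  have "complex_of_real (quadform S (H + z *s W)) = sq S (H + z *s W) (H + z *s W)"
    by (simp add: herm_real[OF herm] sq_def)
  also have "\<dots> = sq S H H + z * sq S H W + cnj z * sq S W H + cnj z * z * sq S W W"
    by (simp add: sq_add_left sq_add_right sq_smult_left sq_smult_right algebra_simps)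
  also have "sq S H W = cnj (sq S W H)" by (rule sq_herm[OF herm])
  finally show ?thesis by (simp add: herm_real[OF herm] sq_def)
qed

lemma min_zero:
  fixes M :: "complex^'l::finite^'m::finite" and S :: "complex^'m^'m"
  assumes herm: "hermitian S" and pos: "\<And>G'. quadform S (M *v G') \<ge> 0" and H0: "quadform S (M *v G) = 0"
  shows "conj_transpose M *v (S *v (M *v G)) = 0"
proof -
  let ?H = "M *v G"
  have g0: "sq S (M *v G') ?H = 0" for G'
  proof -
    let ?W = "M *v G'"
    let ?g = "sq S ?W ?H"
    let ?q = "quadform S ?W"
    have q0: "?q \<ge> 0" by (rule pos)
    define s where "s = 1 / (?q + 1)"
    have s0: "s > 0" using q0 by (simp add: s_def)
    define z where "z = - complex_of_real s * ?g"
    have "M *v (G + z *s G') = ?H + z *s ?W" by (simp add: matrix_vector_right_distrib mv_smult)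
    then have "quadform S (?H + z *s ?W) \<ge> 0" using pos by metis
    moreover have "complex_of_real (quadform S (?H + z *s ?W)) = complex_of_real (s * (s * ?q - 2) * (cmod ?g)^2)"
      unfolding quad_expand[OF herm] H0 z_def
      by (simp add: complex_norm_square[symmetric] algebra_simps power2_eq_square)
    ultimately have "s * (s * ?q - 2) * (cmod ?g)^2 \<ge> 0" by (simp only: of_real_eq_iff)
    moreover have "s * ?q - 2 < 0"
    proof -
      have "s * ?q = ?q / (?q + 1)" by (simp add: s_def)
      also have "\<dots> < 1" using q0 by simp
      finally show ?thesis by simp
    qed
    ultimately have "(cmod ?g)^2 \<le> 0"
    proof -
      assume A: "0 \<le> s * (s * ?q - 2) * (cmod ?g)^2" and B: "s * ?q - 2 < 0"
      have "s * (s * ?q - 2) < 0" using s0 B by (rule mult_pos_neg)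
      then show ?thesis using A B s0 by (auto simp: zero_le_mult_iff)
    qed
    then show ?thesis by simp
  qed
  have "(conj_transpose M *v (S *v ?H)) $ q = 0" for q
  proof -
    have col: "(M *v axis q 1) $ r = M $ r $ q" for r
    proof -
      have "(M *v axis q 1) $ r = (\<Sum>j\<in>UNIV. M $ r $ j * (if j = q then 1 else 0))"
        by (simp add: matrix_vector_mult_def axis_def)
      also have "\<dots> = (\<Sum>j\<in>UNIV. if j = q then M $ r $ q else 0)"
        by (intro sum.cong) auto
      finally have "(M *v axis q 1) $ r = (\<Sum>j\<in>UNIV. if j = q then M $ r $ q else 0)" .
      then show ?thesis by simp
    qed
    have e1: "(conj_transpose M *v v) $ q = (\<Sum>r\<in>UNIV. cnj (M $ r $ q) * v $ r)" for v
      by (simp add: conj_transpose_def matrix_vector_mult_def)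
    have "(conj_transpose M *v (S *v ?H)) $ q = sq S (M *v axis q 1) ?H"
      unfolding e1 sq_def cdot_def col ..
    then show ?thesis using g0 by simp
  qed
  then show ?thesis by (simp add: vec_eq_iff)
qed



lemma quad_smult: "quadform S (z *s H) = (cmod z)^2 * quadform S H"
proof -
  have zz: "cnj z * z = complex_of_real ((cmod z)^2)" by (metis complex_norm_square mult.commute)
  have "cdot (z *s H) (S *v (z *s H)) = (cnj z * z) * cdot H (S *v H)"
    using sq_smult_left[of S z H "z *s H"] sq_smult_right[of S H z H]
    by (simp add: sq_def mult_ac)
  then have "cdot (z *s H) (S *v (z *s H)) = complex_of_real ((cmod z)^2) * cdot H (S *v H)"
    by (simp only: zz)
  then show ?thesis unfolding quadform_def by simp
qed

lemma quad_zero: "quadform S 0 = 0"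
  by (simp add: quadform_def cdot_def)

lemma meas_real:
  assumes Bi: "invertible (B::real^'d::finite^'d)"
  shows "(LINT x:cell B|lborel. (c::real)) = c * \<bar>det B\<bar>"
proof -
  have one: "set_integrable lborel (cell B) (\<lambda>x. (1::complex))" by (rule set_integrable_bounded[OF Bi, of _ 1]) auto
  have "complex_of_real (LINT x:cell B|lborel. c) = (LINT x:cell B|lborel. complex_of_real c * 1)"
    by (simp add: set_integral_complex_of_real)
  also have "\<dots> = complex_of_real c * complex_of_real \<bar>det B\<bar>"
    using orth[OF Bi recip_zero] by (simp only: set_integral_mult_right) simp
  finally show ?thesis by (simp only: of_real_mult[symmetric] of_real_eq_iff)
qed

lemma posQ:
  fixes A0 :: "'m::finite \<Rightarrow> 'l::finite \<Rightarrow> complex"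
    and Ah :: "nat \<Rightarrow> 'd::finite list \<Rightarrow> 'm \<Rightarrow> 'l \<Rightarrow> complex"
    and S :: "complex^'m^'m" and k :: "real^'d"
  assumes herm: "hermitian S" and Q: "qstar_convex A0 Ah t (quadform S)" and k: "k \<noteq> 0"
  shows "quadform S (Lhat A0 Ah t k *v G) \<ge> 0"
proof -
  define B where "B = diagm (bvec k)"
  define H where "H = Lhat A0 Ah t k *v G"
  define c where "c = (\<lambda>k'::real^'d. if k' = k then G else 0)"
  define E where "E = (\<lambda>x. ee k x *s H)"
  have Bi: "invertible B" unfolding B_def by (rule invertible_diagm[OF bvec_nz])
  have kr: "k \<in> recip B" unfolding B_def by (rule k_recip_diag)
  have V0: "\<bar>det B\<bar> > 0" by (rule det_pos[OF Bi])
  have Em[measurable]: "E \<in> borel_measurable borel" unfolding E_def by measurable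
  have qE: "quadform S (E x) = quadform S H" for x by (simp add: E_def quad_smult)
  have Ei: "set_integrable lborel (cell B) E"
    by (rule set_integrable_bounded[OF Bi Em, of "norm H"]) (simp add: E_def norm_smult_vec)
  have main: "avg B (\<lambda>x. quadform S (E x)) \<ge> quadform S (avg B E)"
  proof -
    have P1: "poly_deg_le t (\<lambda>x::real^'d. 0::complex^'l)" by (rule poly_zero)
    have P2: "\<forall>x. Lop A0 Ah t (\<lambda>x. 0) x = 0" by (simp add: Lop_zero)
    have P3: "\<exists>C N. \<forall>k\<in>recip B. norm (c k) \<le> C * (1 + norm k) ^ N"
      by (intro exI[of _ "norm G"] exI[of _ "0::nat"]) (simp add: c_def)
    have P4: "(\<lambda>k. (norm (Lhat A0 Ah t k *v c k))^2) summable_on recip B"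
    proof -
      have "(\<lambda>k. (norm (Lhat A0 Ah t k *v c k))^2) summable_on recip B \<longleftrightarrow>
            (\<lambda>k. (norm (Lhat A0 Ah t k *v c k))^2) summable_on {k}"
        by (rule summable_on_cong_neutral) (auto simp: c_def kr)
      then show ?thesis by simp
    qed
    have P5: "has_L2_fourier B (\<lambda>x. E x - 0) (\<lambda>k. Lhat A0 Ah t k *v c k)"
      unfolding has_L2_fourier_def
    proof (intro conjI)
      show "(\<lambda>x. E x - 0) \<in> borel_measurable lborel" by simp
      show "set_integrable lborel (cell B) (\<lambda>x. (norm (E x - 0))^2)"
        by (rule set_integrable_bounded[OF Bi, of _ "(norm H)^2"]) (auto simp: E_def norm_smult_vec)
      have "eventually (\<lambda>F. (LINT x:cell B|lborel. (norm (E x - 0 - (\<Sum>k\<in>F. exp (\<i> * complex_of_real (k \<bullet> x)) *s (Lhat A0 Ah t k *v c k))))^2) = 0)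
          (finite_subsets_at_top (recip B))"
        using eventually_contains[OF kr]
      proof eventually_elim
        case (elim F)
        have "(\<Sum>k'\<in>F. exp (\<i> * complex_of_real (k' \<bullet> x)) *s (Lhat A0 Ah t k' *v c k')) = E x" for x
        proof -
          have "(\<Sum>k'\<in>F. exp (\<i> * complex_of_real (k' \<bullet> x)) *s (Lhat A0 Ah t k' *v c k')) =
              (\<Sum>k'\<in>F. if k' = k then E x else 0)"
            by (intro sum.cong refl) (auto simp: c_def E_def H_def ee_def)
          also have "\<dots> = E x" using elim by simp
          finally show ?thesis .
        qed
        then show ?case by simp
      qed
      then show "((\<lambda>F. LINT x:cell B|lborel. (norm (E x - 0 - (\<Sum>k\<in>F. exp (\<i> * complex_of_real (k \<bullet> x)) *s (Lhat A0 Ah t k *v c k))))^2) \<longlongrightarrow> 0)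
          (finite_subsets_at_top (recip B))"
        by (rule tendsto_eventually)
    qed
    have P6: "set_integrable lborel (cell B) (\<lambda>x. quadform S (E x))"
      unfolding qE by (rule set_integrable_bounded[OF Bi, of _ "\<bar>quadform S H\<bar>"]) auto
    show ?thesis
      using Q unfolding qstar_convex_def
      using Bi P1 P2 P3 P4 P5 P6 by blast
  qed
  have a1: "avg B (\<lambda>x. quadform S (E x)) = quadform S H"
    unfolding avg_def qE meas_real[OF Bi] using V0 by simp
  have a2: "avg B E = 0"
  proof -
    have "(avg B E) $ r = 0" for r
    proof -
      have "(avg B E) $ r = (1 / \<bar>det B\<bar>) *\<^sub>R ((LINT x:cell B|lborel. E x) $ r)"
        by (simp add: avg_def)
      also have "(LINT x:cell B|lborel. E x) $ r = (LINT x:cell B|lborel. E x $ r)"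
        by (rule set_integral_component[OF Ei])
      also have "(\<lambda>x. E x $ r) = (\<lambda>x. ee k x * H $ r)" by (simp add: E_def fun_eq_iff)
      also have "(LINT x:cell B|lborel. ee k x * H $ r) = (LINT x:cell B|lborel. ee k x) * H $ r"
        by (rule set_integral_mult_left)
      also have "(LINT x:cell B|lborel. ee k x) = 0" using orth[OF Bi kr] k by (simp add: ee_def)
      finally show ?thesis by simp
    qed
    then show ?thesis by (simp add: vec_eq_iff)
  qed
  show ?thesis using main unfolding a1 a2 quad_zero H_def .
qed

theorem mainTheorem6:
  fixes A0 :: "'m::finite \<Rightarrow> 'l::finite \<Rightarrow> complex"
    and Ah :: "nat \<Rightarrow> 'd::finite list \<Rightarrow> 'm \<Rightarrow> 'l \<Rightarrow> complex"
    and t :: nat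
    and S :: "complex^'m^'m"
  assumes "t \<ge> 1"
    and "hermitian S"
    and "qstar_convex A0 Ah t (quadform S)"
  shows "(\<forall>k::real^'d. k \<noteq> 0 \<longrightarrow>
            (\<forall>G\<in>Uset S A0 Ah t k. S *v (Lhat A0 Ah t k *v G) \<in> nullJ A0 Ah t k))
    \<and> (\<forall>(B::real^'d^'d) (c::real^'d \<Rightarrow> complex^'l) (U0::real^'d \<Rightarrow> complex^'l) E0 E.
          invertible B
          \<and> (\<forall>k\<in>recip B - {0}. c k \<in> Uset S A0 Ah t k)
          \<and> (\<lambda>k. (norm (Lhat A0 Ah t k *v c k))^2) summable_on (recip B - {0})
          \<and> poly_deg_le t U0 \<and> (\<forall>x. Lop A0 Ah t U0 x = E0)
          \<and> has_L2_fourier B (\<lambda>x. E x - E0) (\<lambda>k. if k = 0 then 0 else Lhat A0 Ah t k *v c k)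
          \<longrightarrow> avg B (\<lambda>x. quadform S (E x)) = quadform S (avg B E)
            \<and> (\<forall>k\<in>recip B - {0}. fourier_coeff B (\<lambda>x. S *v E x) k \<in> nullJ A0 Ah t k))"
proof -
  note herm = assms(2) and Q = assms(3)
  have P1: "S *v (Lhat A0 Ah t k *v G) \<in> nullJ A0 Ah t k" if k: "k \<noteq> 0" and G: "G \<in> Uset S A0 Ah t k" for k :: "real^'d" and G
  proof -
    have q0: "quadform S (Lhat A0 Ah t k *v G) = 0" using G by (simp add: Uset_def Sset_def)
    have "conj_transpose (Lhat A0 Ah t k) *v (S *v (Lhat A0 Ah t k *v G)) = 0"
      by (rule min_zero[OF herm posQ[OF herm Q k] q0])
    then show ?thesis by (simp add: nullJ_def)
  qed
  show ?thesis
  proof (intro conjI allI impI ballI)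
    fix k :: "real^'d" and G assume "k \<noteq> 0" "G \<in> Uset S A0 Ah t k"
    then show "S *v (Lhat A0 Ah t k *v G) \<in> nullJ A0 Ah t k" by (rule P1)
  next
    fix B :: "real^'d^'d" and c :: "real^'d \<Rightarrow> complex^'l" and U0 :: "real^'d \<Rightarrow> complex^'l" and E0 E
    assume A: "invertible B
          \<and> (\<forall>k\<in>recip B - {0}. c k \<in> Uset S A0 Ah t k)
          \<and> (\<lambda>k. (norm (Lhat A0 Ah t k *v c k))^2) summable_on (recip B - {0})
          \<and> poly_deg_le t U0 \<and> (\<forall>x. Lop A0 Ah t U0 x = E0)
          \<and> has_L2_fourier B (\<lambda>x. E x - E0) (\<lambda>k. if k = 0 then 0 else Lhat A0 Ah t k *v c k)"
    then have Bi: "invertible B" and cU: "\<And>k. k \<in> recip B - {0} \<Longrightarrow> c k \<in> Uset S A0 Ah t k"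
      and H: "has_L2_fourier B (\<lambda>x. E x - E0) (\<lambda>k. if k = 0 then 0 else Lhat A0 Ah t k *v c k)" by auto
    have aq: "quadform S (if k = 0 then 0 else Lhat A0 Ah t k *v c k) = 0" if "k \<in> recip B" for k
      using cU[of k] that by (auto simp: quad_zero Uset_def Sset_def)
    have a0: "(if (0::real^'d) = 0 then 0 else Lhat A0 Ah t 0 *v c 0) = (0::complex^'m)" by simp
    show "avg B (\<lambda>x. quadform S (E x)) = quadform S (avg B E)"
      by (rule partii(1)[OF Bi herm H a0]) (use aq in blast)
    fix k assume k: "k \<in> recip B - {0}"
    have "fourier_coeff B (\<lambda>x. S *v E x) k = S *v (if k = 0 then 0 else Lhat A0 Ah t k *v c k)"
      by (rule partii(2)[OF Bi herm H a0]) (use aq k in blast)+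
    then have "fourier_coeff B (\<lambda>x. S *v E x) k = S *v (Lhat A0 Ah t k *v c k)"
      using k by simp
    then show "fourier_coeff B (\<lambda>x. S *v E x) k \<in> nullJ A0 Ah t k"
      using P1[of k "c k"] k cU[OF k] by simp
  qed
qed

end
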